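(* Let $\{(\mathbf{z}_{ni},v_{ni},\epsilon_{ni})\}$ be a triangular array satisfying: (a) within rows iid and mean zero; (b) $E[\mathbf{z}_{ni}\epsilon_{ni}]=\mathbf{0}$, $E[\mathbf{z}_{ni}v_{ni}]=\mathbf{0}$, $E[\epsilon_{ni}v_{ni}]=\tau/\sqrt{n}$; (c) uniformly bounded $(4+\eta)$-th moments of $\mathbf{z}_{ni},\epsilon_{ni},v_{ni}$ for some $\eta>0$; (d) $E[\mathbf{z}_{ni}\mathbf{z}_{ni}']\to Q>0$, $E[v_{ni}^2]\to\sigma_v^2>0$, $E[\epsilon_{ni}^2]\to\sigma_\epsilon^2>0$; (e) $E[\epsilon_{ni}^2\mathbf{z}_{ni}\mathbf{z}_{ni}']-E[\epsilon_{ni}^2]E[\mathbf{z}_{ni}\mathbf{z}_{ni}']\to0$, $E[\epsilon_{ni}^2v_{ni}\mathbf{z}_{ni}']-E[\epsilon_{ni}^2]E[v_{ni}\mathbf{z}_{ni}']\to0$, $E[\epsilon_{ni}^2v_{ni}^2]-E[\epsilon_{ni}^2]E[v_{ni}^2]\to0$; (f) $x_{ni}=\mathbf{z}_{ni}'\boldsymbol{\pi}+v_{ni}$, $\boldsymbol{\pi}\ne\mathbf{0}$, $y_{ni}=\beta x_{ni}+\epsilon_{ni}$. Let $\widetilde{\beta}_{TSLS}=(\mathbf{x}'P_Z\mathbf{x})^{-1}\mathbf{x}'P_Z\mathbf{y}$ with $P_Z=Z(Z'Z)^{-1}Z'$, and $\widehat{\tau}=n^{-1/2}\mathbf{x}'(\mathbf{y}-\mathbf{x}\widetilde{\beta}_{TSLS})$.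 Then $\widehat{\tau}\to_dN(\tau,V)$ with $V=\sigma_\epsilon^2\sigma_x^2(\sigma_v^2/\gamma^2)$, where $\gamma^2=\boldsymbol{\pi}'Q\boldsymbol{\pi}$ and $\sigma_x^2=\gamma^2+\sigma_v^2$.
   Context: $\mathbf{x},\mathbf{y}$ stack $x_{ni},y_{ni}$; $Z$ has rows $\mathbf{z}_{ni}'$. *)

theory Defs
  imports "HOL-Probability.Probability"
begin

definition outer :: "real^'k \<Rightarrow> real^'k \<Rightarrow> real^'k^'k" where
  "outer a b = (\<chi> i j. a $ i * b $ j)"

definition pos_def_mat :: "real^'k^'k \<Rightarrow> bool" where
  "pos_def_mat Q \<longleftrightarrow> (\<forall>x. x \<noteq> 0 \<longrightarrow> x \<bullet> (Q *v x) > 0)"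

text \<open>Sample of size n with instrument rows z i (i < n): Z'Z and Z'a.\<close>
definition ZtZ :: "nat \<Rightarrow> (nat \<Rightarrow> real^'k) \<Rightarrow> real^'k^'k" where
  "ZtZ n z = (\<Sum>i<n. outer (z i) (z i))"

definition Zt :: "nat \<Rightarrow> (nat \<Rightarrow> real^'k) \<Rightarrow> (nat \<Rightarrow> real) \<Rightarrow> real^'k" where
  "Zt n z a = (\<Sum>i<n. a i *\<^sub>R z i)"

text \<open>Bilinear form a' P_Z b = (Z'a)' (Z'Z)^{-1} (Z'b); set to 0 if Z'Z is singular.\<close>
definition projform :: "nat \<Rightarrow> (nat \<Rightarrow> real^'k) \<Rightarrow> (nat \<Rightarrow> real) \<Rightarrow> (nat \<Rightarrow> real) \<Rightarrow> real" where
  "projform n z a b =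
     (if invertible (ZtZ n z) then Zt n z a \<bullet> (matrix_inv (ZtZ n z) *v Zt n z b) else 0)"

text \<open>TSLS estimator (x'P_Z x)^{-1} x'P_Z y (division by 0 gives 0).\<close>
definition beta_tsls :: "nat \<Rightarrow> (nat \<Rightarrow> real^'k) \<Rightarrow> (nat \<Rightarrow> real) \<Rightarrow> (nat \<Rightarrow> real) \<Rightarrow> real" where
  "beta_tsls n z x y = projform n z x y / projform n z x x"

definition tau_hat :: "nat \<Rightarrow> (nat \<Rightarrow> real^'k) \<Rightarrow> (nat \<Rightarrow> real) \<Rightarrow> (nat \<Rightarrow> real) \<Rightarrow> real" where
  "tau_hat n z x y = (\<Sum>i<n. x i * (y i - x i * beta_tsls n z x y)) / sqrt (real n)"

end

theory Submission
  imports Defs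
begin

lemma (in prob_space) indep_sum_sq:
  fixes Y :: "nat \<Rightarrow> 'a \<Rightarrow> real"
  assumes ind: "indep_vars (\<lambda>_. borel) Y I" and fin: "finite I"
    and sq: "\<And>i. i\<in>I \<Longrightarrow> integrable M (\<lambda>\<omega>. (Y i \<omega>)\<^sup>2)"
    and m0: "\<And>i. i\<in>I \<Longrightarrow> expectation (Y i) = 0"
  shows "expectation (\<lambda>\<omega>. (\<Sum>i\<in>I. Y i \<omega>)\<^sup>2) = (\<Sum>i\<in>I. expectation (\<lambda>\<omega>. (Y i \<omega>)\<^sup>2))"
proof -
  have rv: "\<And>i. i \<in> I \<Longrightarrow> Y i \<in> borel_measurable M"
    using ind unfolding indep_vars_def2 by auto
  have int1: "\<And>i. i \<in> I \<Longrightarrow> integrable M (Y i)"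
    using rv sq square_integrable_imp_integrable by blast
  have prodint: "integrable M (\<lambda>\<omega>. Y i \<omega> * Y j \<omega>)" and
       prodexp: "expectation (\<lambda>\<omega>. Y i \<omega> * Y j \<omega>) = (if i = j then expectation (\<lambda>\<omega>. (Y i \<omega>)\<^sup>2) else 0)"
    if ij: "i \<in> I" "j \<in> I" for i j
  proof -
    have "integrable M (\<lambda>\<omega>. Y i \<omega> * Y j \<omega>) \<and>
      expectation (\<lambda>\<omega>. Y i \<omega> * Y j \<omega>) = (if i = j then expectation (\<lambda>\<omega>. (Y i \<omega>)\<^sup>2) else 0)"
    proof (cases "i = j")
      case True then show ?thesis using sq[OF ij(1)] by (simp add: power2_eq_square)
    next
      case False
      have ind2: "indep_vars (\<lambda>_. borel) Y {i, j}"
        using indep_vars_subset[OF ind] ij by auto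
      have i1: "\<And>l. l \<in> {i,j} \<Longrightarrow> integrable M (Y l)" using int1 ij by auto
      have "(\<lambda>\<omega>. \<Prod>l\<in>{i,j}. Y l \<omega>) = (\<lambda>\<omega>. Y i \<omega> * Y j \<omega>)" using False by auto
      moreover note indep_vars_integrable[OF _ ind2 i1] indep_vars_lebesgue_integral[OF _ ind2 i1]
      ultimately show ?thesis using False m0 ij by auto
    qed
    then show "integrable M (\<lambda>\<omega>. Y i \<omega> * Y j \<omega>)"
      "expectation (\<lambda>\<omega>. Y i \<omega> * Y j \<omega>) = (if i = j then expectation (\<lambda>\<omega>. (Y i \<omega>)\<^sup>2) else 0)" by auto
  qed
  have "(\<lambda>\<omega>. (\<Sum>i\<in>I. Y i \<omega>)\<^sup>2) = (\<lambda>\<omega>. \<Sum>i\<in>I. \<Sum>j\<in>I. Y i \<omega> * Y j \<omega>)"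
    by (simp add: power2_eq_square sum_product)
  then have "expectation (\<lambda>\<omega>. (\<Sum>i\<in>I. Y i \<omega>)\<^sup>2) = (\<Sum>i\<in>I. \<Sum>j\<in>I. expectation (\<lambda>\<omega>. Y i \<omega> * Y j \<omega>))"
    using prodint by (simp add: Bochner_Integration.integral_sum Bochner_Integration.integrable_sum)
  also have "\<dots> = (\<Sum>i\<in>I. \<Sum>j\<in>I. (if i = j then expectation (\<lambda>\<omega>. (Y i \<omega>)\<^sup>2) else 0))"
    using prodexp by (intro sum.cong) auto
  also have "\<dots> = (\<Sum>i\<in>I. expectation (\<lambda>\<omega>. (Y i \<omega>)\<^sup>2))"
    using fin by (simp add: sum.delta)
  finally show ?thesis .
qed

lemma abs_prod_le_sq: "\<bar>a * b\<bar> \<le> a\<^sup>2 + (b::real)\<^sup>2"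
proof -
  have "0 \<le> (\<bar>a\<bar> - \<bar>b\<bar>)\<^sup>2" by simp
  hence "2 * (\<bar>a\<bar> * \<bar>b\<bar>) \<le> a\<^sup>2 + b\<^sup>2" by (simp add: power2_diff)
  moreover have "0 \<le> \<bar>a\<bar> * \<bar>b\<bar>" by simp
  ultimately show ?thesis unfolding abs_mult by linarith
qed

lemma (in prob_space) ident_integral:
  fixes T :: "nat \<Rightarrow> 'a \<Rightarrow> 'b::topological_space" and h :: "'b \<Rightarrow> real"
  assumes "distr M borel (T i) = distr M borel (T 0)"
    and "T i \<in> borel_measurable M" "T 0 \<in> borel_measurable M"
    and "h \<in> borel_measurable borel"
  shows "(\<integral>\<omega>. h (T i \<omega>) \<partial>M) = (\<integral>\<omega>. h (T 0 \<omega>) \<partial>M)"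
    and "integrable M (\<lambda>\<omega>. h (T i \<omega>)) \<longleftrightarrow> integrable M (\<lambda>\<omega>. h (T 0 \<omega>))"
proof -
  have "(\<integral>\<omega>. h (T i \<omega>) \<partial>M) = (\<integral>x. h x \<partial>distr M borel (T i))"
    by (subst integral_distr) (use assms in auto)
  also have "\<dots> = (\<integral>x. h x \<partial>distr M borel (T 0))" using assms(1) by simp
  also have "\<dots> = (\<integral>\<omega>. h (T 0 \<omega>) \<partial>M)" using assms by (simp add: integral_distr)
  finally show "(\<integral>\<omega>. h (T i \<omega>) \<partial>M) = (\<integral>\<omega>. h (T 0 \<omega>) \<partial>M)" .
  have A: "integrable (distr M borel (T i)) h \<longleftrightarrow> integrable M (\<lambda>\<omega>. h (T i \<omega>))"
    by (rule integrable_distr_eq) (use assms in auto)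
  have B: "integrable (distr M borel (T 0)) h \<longleftrightarrow> integrable M (\<lambda>\<omega>. h (T 0 \<omega>))"
    by (rule integrable_distr_eq) (use assms in auto)
  show "integrable M (\<lambda>\<omega>. h (T i \<omega>)) \<longleftrightarrow> integrable M (\<lambda>\<omega>. h (T 0 \<omega>))"
    by (metis A B assms(1))
qed

lemma (in prob_space) row_cheb:
  fixes T :: "nat \<Rightarrow> 'a \<Rightarrow> 'b::topological_space" and g :: "'b \<Rightarrow> real"
  assumes ind: "indep_vars (\<lambda>_. borel) T {..<n}"
    and ident: "\<And>i. i < n \<Longrightarrow> distr M borel (T i) = distr M borel (T 0)"
    and g[measurable]: "g \<in> borel_measurable borel"
    and sq: "integrable M (\<lambda>\<omega>. (g (T 0 \<omega>))\<^sup>2)"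
    and n: "0 < n" and a: "0 < a"
  shows "prob {\<omega> \<in> space M. a \<le> \<bar>(\<Sum>i<n. g (T i \<omega>)) - real n * expectation (\<lambda>\<omega>. g (T 0 \<omega>))\<bar>}
           \<le> real n * expectation (\<lambda>\<omega>. (g (T 0 \<omega>))\<^sup>2) / a\<^sup>2"
proof -
  define m where "m = expectation (\<lambda>\<omega>. g (T 0 \<omega>))"
  define Y where "Y i \<omega> = g (T i \<omega>) - m" for i \<omega>
  have rv[measurable]: "\<And>i. i < n \<Longrightarrow> T i \<in> borel_measurable M"
    using ind unfolding indep_vars_def2 by auto
  have rv0[measurable]: "T 0 \<in> borel_measurable M" using rv n by auto
  have h2: "(\<lambda>t. (g t - m)\<^sup>2) \<in> borel_measurable borel" by measurable
  have int0: "integrable M (\<lambda>\<omega>. g (T 0 \<omega>))"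
    using sq square_integrable_imp_integrable[of "\<lambda>\<omega>. g (T 0 \<omega>)"] by auto
  have sq0: "integrable M (\<lambda>\<omega>. (g (T 0 \<omega>) - m)\<^sup>2)"
    using sq int0 unfolding power2_diff by (intro Bochner_Integration.integrable_diff Bochner_Integration.integrable_add) auto
  have e0: "expectation (\<lambda>\<omega>. (g (T 0 \<omega>) - m)\<^sup>2) \<le> expectation (\<lambda>\<omega>. (g (T 0 \<omega>))\<^sup>2)"
  proof -
    have "expectation (\<lambda>\<omega>. (g (T 0 \<omega>) - m)\<^sup>2) =
        expectation (\<lambda>\<omega>. (g (T 0 \<omega>))\<^sup>2) - 2 * m * expectation (\<lambda>\<omega>. g (T 0 \<omega>)) + m\<^sup>2"
      using sq int0 unfolding power2_diff
      by (simp add: prob_space Bochner_Integration.integral_diff Bochner_Integration.integral_add mult.assoc)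
    also have "\<dots> = expectation (\<lambda>\<omega>. (g (T 0 \<omega>))\<^sup>2) - m\<^sup>2" by (simp add: m_def power2_eq_square)
    finally show ?thesis by simp
  qed
  have indY: "indep_vars (\<lambda>_. borel) Y {..<n}"
    unfolding Y_def by (rule indep_vars_compose2[OF ind]) auto
  have sqY: "integrable M (\<lambda>\<omega>. (Y i \<omega>)\<^sup>2)" and eY2: "expectation (\<lambda>\<omega>. (Y i \<omega>)\<^sup>2) = expectation (\<lambda>\<omega>. (g (T 0 \<omega>) - m)\<^sup>2)"
    and eY: "expectation (Y i) = 0" if i: "i < n" for i
  proof -
    note I = ident_integral[OF ident[OF i] rv[OF i] rv0]
    show "integrable M (\<lambda>\<omega>. (Y i \<omega>)\<^sup>2)" unfolding Y_def using I(2)[OF h2] sq0 by simp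
    show "expectation (\<lambda>\<omega>. (Y i \<omega>)\<^sup>2) = expectation (\<lambda>\<omega>. (g (T 0 \<omega>) - m)\<^sup>2)" unfolding Y_def using I(1)[OF h2] by simp
    have gi: "integrable M (\<lambda>\<omega>. g (T i \<omega>))" using I(2)[OF g] int0 by simp
    have "expectation (Y i) = expectation (\<lambda>\<omega>. g (T i \<omega>)) - m"
      unfolding Y_def using gi by (simp add: prob_space Bochner_Integration.integral_diff)
    also have "\<dots> = 0" using I(1)[OF g] m_def by simp
    finally show "expectation (Y i) = 0" .
  qed
  have eq: "(\<Sum>i<n. g (T i \<omega>)) - real n * m = (\<Sum>i<n. Y i \<omega>)" for \<omega>
    unfolding Y_def by (simp add: sum_subtractf)
  have mY[measurable]: "(\<lambda>\<omega>. \<Sum>i<n. Y i \<omega>) \<in> borel_measurable M"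
    unfolding Y_def by measurable
  have sqS: "integrable M (\<lambda>\<omega>. (\<Sum>i<n. Y i \<omega>)\<^sup>2)"
  proof -
    have "(\<lambda>\<omega>. (\<Sum>i<n. Y i \<omega>)\<^sup>2) = (\<lambda>\<omega>. \<Sum>i<n. \<Sum>j<n. Y i \<omega> * Y j \<omega>)"
      by (simp add: power2_eq_square sum_product)
    moreover have "integrable M (\<lambda>\<omega>. Y i \<omega> * Y j \<omega>)" if "i < n" "j < n" for i j
    proof (rule Bochner_Integration.integrable_bound[where f="\<lambda>\<omega>. (Y i \<omega>)\<^sup>2 + (Y j \<omega>)\<^sup>2"])
      show "integrable M (\<lambda>\<omega>. (Y i \<omega>)\<^sup>2 + (Y j \<omega>)\<^sup>2)" using sqY that by auto
      show "(\<lambda>\<omega>. Y i \<omega> * Y j \<omega>) \<in> borel_measurable M" unfolding Y_def using that by measurable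
      show "AE \<omega> in M. norm (Y i \<omega> * Y j \<omega>) \<le> norm ((Y i \<omega>)\<^sup>2 + (Y j \<omega>)\<^sup>2)"
        by (auto intro!: abs_prod_le_sq)
    qed
    ultimately show ?thesis by (auto intro!: Bochner_Integration.integrable_sum)
  qed
  have "prob {\<omega> \<in> space M. a \<le> \<bar>\<Sum>i<n. Y i \<omega>\<bar>} \<le> expectation (\<lambda>\<omega>. (\<Sum>i<n. Y i \<omega>)\<^sup>2) / a\<^sup>2"
    by (rule second_moment_method) (use mY sqS a in auto)
  also have "expectation (\<lambda>\<omega>. (\<Sum>i<n. Y i \<omega>)\<^sup>2) = (\<Sum>i<n. expectation (\<lambda>\<omega>. (Y i \<omega>)\<^sup>2))"
    by (rule indep_sum_sq[OF indY]) (auto simp: sqY eY)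
  also have "\<dots> = real n * expectation (\<lambda>\<omega>. (g (T 0 \<omega>) - m)\<^sup>2)" using eY2 by simp
  finally have "prob {\<omega> \<in> space M. a \<le> \<bar>\<Sum>i<n. Y i \<omega>\<bar>} \<le> real n * expectation (\<lambda>\<omega>. (g (T 0 \<omega>) - m)\<^sup>2) / a\<^sup>2" .
  also have "\<dots> \<le> real n * expectation (\<lambda>\<omega>. (g (T 0 \<omega>))\<^sup>2) / a\<^sup>2"
    using e0 by (intro divide_right_mono mult_left_mono) auto
  finally show ?thesis unfolding eq[symmetric] m_def .
qed

lemma char_distr_scale:
  assumes "f \<in> borel_measurable M"
  shows "char (distr M borel (\<lambda>\<omega>. f \<omega> / c)) t = char (distr M borel f) (t / c)"
proof -
  have "char (distr M borel (\<lambda>\<omega>. f \<omega> / c)) t = (CLINT \<omega>|M. iexp (t * (f \<omega> / c)))"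
    unfolding char_def using assms by (subst integral_distr) auto
  also have "\<dots> = (CLINT \<omega>|M. iexp (t / c * f \<omega>))" by (simp add: field_simps)
  also have "\<dots> = char (distr M borel f) (t / c)"
    unfolding char_def using assms by (subst integral_distr) auto
  finally show ?thesis .
qed

lemma char_row:
  fixes M :: "'a measure" and X :: "nat \<Rightarrow> 'a \<Rightarrow> real"
  assumes P: "prob_space M"
    and ind: "prob_space.indep_vars M (\<lambda>_. borel) X {..<n}"
    and ident: "\<And>i. i < n \<Longrightarrow> distr M borel (X i) = distr M borel (X 0)"
  shows "char (distr M borel (\<lambda>\<omega>. (\<Sum>i<n. X i \<omega>) / c)) t = (char (distr M borel (X 0)) (t / c)) ^ n"
proof -
  interpret prob_space M by fact
  have rv: "\<And>i. i < n \<Longrightarrow> X i \<in> borel_measurable M"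
    using ind unfolding indep_vars_def2 by auto
  have ind2: "indep_vars (\<lambda>_. borel) (\<lambda>i \<omega>. X i \<omega> / c) {..<n}"
    by (rule indep_vars_compose2[OF ind]) auto
  have "char (distr M borel (\<lambda>\<omega>. (\<Sum>i<n. X i \<omega>) / c)) t
      = char (distr M borel (\<lambda>\<omega>. \<Sum>i<n. X i \<omega> / c)) t"
    by (simp add: sum_divide_distrib)
  also have "\<dots> = (\<Prod>i<n. char (distr M borel (\<lambda>\<omega>. X i \<omega> / c)) t)"
    by (rule char_distr_sum[OF ind2])
  also have "\<dots> = (\<Prod>i<n. char (distr M borel (X 0)) (t / c))"
  proof (rule prod.cong)
    fix i assume "i \<in> {..<n}"
    then show "char (distr M borel (\<lambda>\<omega>. X i \<omega> / c)) t = char (distr M borel (X 0)) (t / c)"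
      using char_distr_scale[OF rv, of i c t] ident[of i] by auto
  qed simp
  finally show ?thesis by simp
qed

lemma min_powr_bound:
  fixes x u \<delta> :: real
  assumes "0 \<le> u" "0 < \<delta>" "\<delta> \<le> 1"
  shows "min (6 * x\<^sup>2) (u * \<bar>x\<bar>^3) \<le> 6 * (u powr \<delta> * \<bar>x\<bar> powr (2 + \<delta>))"
proof (cases "x = 0 \<or> u = 0")
  case True then show ?thesis using assms by auto
next
  case False
  then have x0: "\<bar>x\<bar> > 0" and u0: "u > 0" using assms by auto
  have key: "\<bar>x\<bar> powr (2 + \<delta>) = x\<^sup>2 * \<bar>x\<bar> powr \<delta>"
    using x0 by (simp add: powr_add powr_numeral)
  have uxd: "(u * \<bar>x\<bar>) powr \<delta> = u powr \<delta> * \<bar>x\<bar> powr \<delta>"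
    using x0 u0 by (simp add: powr_mult)
  show ?thesis
  proof (cases "u * \<bar>x\<bar> \<le> 1")
    case True
    have "u * \<bar>x\<bar> \<le> (u * \<bar>x\<bar>) powr \<delta>"
      using True assms x0 u0 powr_mono'[of \<delta> 1 "u * \<bar>x\<bar>"] by auto
    then have "x\<^sup>2 * (u * \<bar>x\<bar>) \<le> x\<^sup>2 * (u * \<bar>x\<bar>) powr \<delta>" by (simp add: mult_left_mono)
    moreover have "u * \<bar>x\<bar>^3 = x\<^sup>2 * (u * \<bar>x\<bar>)" by (simp add: power2_eq_square power3_eq_cube)
    ultimately have "u * \<bar>x\<bar>^3 \<le> x\<^sup>2 * (u powr \<delta> * \<bar>x\<bar> powr \<delta>)" using uxd by metis
    also have "\<dots> \<le> 6 * (u powr \<delta> * \<bar>x\<bar> powr (2 + \<delta>))"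
      using key by (simp add: algebra_simps)
    finally show ?thesis by simp
  next
    case False
    have "1 \<le> (u * \<bar>x\<bar>) powr \<delta>" using False assms by (intro ge_one_powr_ge_zero) auto
    then have "6 * x\<^sup>2 \<le> 6 * x\<^sup>2 * (u * \<bar>x\<bar>) powr \<delta>" by (simp add: mult_le_cancel_left1)
    also have "\<dots> = 6 * (u powr \<delta> * \<bar>x\<bar> powr (2 + \<delta>))" using uxd key by (simp add: algebra_simps)
    finally show ?thesis by simp
  qed
qed

lemma clt_tri:
  fixes M :: "nat \<Rightarrow> 'a measure" and X :: "nat \<Rightarrow> nat \<Rightarrow> 'a \<Rightarrow> real"
  assumes P: "\<And>n. prob_space (M n)"
    and ind: "\<And>n. prob_space.indep_vars (M n) (\<lambda>_. borel) (X n) {..<n}"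
    and ident: "\<And>n i. i < n \<Longrightarrow> distr (M n) borel (X n i) = distr (M n) borel (X n 0)"
    and int1: "\<And>n. 0 < n \<Longrightarrow> integrable (M n) (X n 0)"
    and mean0: "\<And>n. 0 < n \<Longrightarrow> (\<integral>\<omega>. X n 0 \<omega> \<partial>M n) = 0"
    and int2: "\<And>n. 0 < n \<Longrightarrow> integrable (M n) (\<lambda>\<omega>. (X n 0 \<omega>)\<^sup>2)"
    and var: "(\<lambda>n. \<integral>\<omega>. (X n 0 \<omega>)\<^sup>2 \<partial>M n) \<longlonglongrightarrow> V" and Vpos: "0 < V"
    and d: "0 < \<delta>" "\<delta> \<le> 1"
    and intp: "\<And>n. 0 < n \<Longrightarrow> integrable (M n) (\<lambda>\<omega>. \<bar>X n 0 \<omega>\<bar> powr (2 + \<delta>))"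
    and boundp: "\<And>n. 0 < n \<Longrightarrow> (\<integral>\<omega>. \<bar>X n 0 \<omega>\<bar> powr (2 + \<delta>) \<partial>M n) \<le> K"
  shows "weak_conv_m (\<lambda>n. distr (M n) borel (\<lambda>\<omega>. (\<Sum>i<n. X n i \<omega>) / sqrt (real n * V)))
           std_normal_distribution"
proof (rule levy_continuity)
  have rv: "\<And>n i. i < n \<Longrightarrow> X n i \<in> borel_measurable (M n)"
    using ind P unfolding prob_space.indep_vars_def2[OF P] by auto
  show "real_distribution (distr (M n) borel (\<lambda>\<omega>. (\<Sum>i<n. X n i \<omega>) / sqrt (real n * V)))" for n
    by (rule prob_space.real_distribution_distr[OF P]) (use rv in auto)
  show "real_distribution std_normal_distribution" by (rule real_dist_normal_dist)
  fix t :: real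
  define s where "s n = (\<integral>\<omega>. (X n 0 \<omega>)\<^sup>2 \<partial>M n)" for n
  define \<mu> where "\<mu> n = distr (M n) borel (X n 0)" for n
  define u where "u n = t / sqrt (real n * V)" for n
  define a where "a n = -(t\<^sup>2 * s n) / (2 * V)" for n
  define a0 where "a0 = -(t\<^sup>2) / 2"
  define \<phi> where "\<phi> n = char (distr (M n) borel (\<lambda>\<omega>. (\<Sum>i<n. X n i \<omega>) / sqrt (real n * V))) t" for n
  have s_nonneg: "0 \<le> s n" for n unfolding s_def by simp
  have ev_s: "eventually (\<lambda>n. s n < 2 * V) sequentially"
    using order_tendstoD(2)[OF var[folded s_def], of "2 * V"] Vpos by auto
  have ev_n: "eventually (\<lambda>n. n \<ge> Suc (nat \<lceil>t\<^sup>2\<rceil>)) sequentially" by (rule eventually_ge_at_top)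
  have good: "cmod (\<phi> n - complex_of_real ((1 + a n / real n) ^ n)) \<le> t\<^sup>2 / V * K * \<bar>u n\<bar> powr \<delta>
           \<and> \<bar>(1 + a n / real n) ^ n - (1 + a0 / real n) ^ n\<bar> \<le> \<bar>a n - a0\<bar>"
    if sn: "s n < 2 * V" and nn: "n \<ge> Suc (nat \<lceil>t\<^sup>2\<rceil>)" for n
  proof -
    have n0: "0 < n" using nn by auto
    have nt: "t\<^sup>2 \<le> real n" using nn by linarith
    interpret Mn: prob_space "M n" by (rule P)
    have rv0[measurable]: "X n 0 \<in> borel_measurable (M n)" using rv n0 by auto
    interpret mu: real_distribution "\<mu> n" unfolding \<mu>_def by (rule Mn.real_distribution_distr) simp
    have ia1: "integrable (\<mu> n) (\<lambda>x. x)" unfolding \<mu>_def using int1[OF n0] by (simp add: integrable_distr_eq)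
    have ea1: "mu.expectation (\<lambda>x. x) = 0" unfolding \<mu>_def using mean0[OF n0] by (simp add: integral_distr)
    have ia2: "integrable (\<mu> n) (\<lambda>x. x\<^sup>2)" unfolding \<mu>_def using int2[OF n0] by (simp add: integrable_distr_eq)
    have va: "mu.variance (\<lambda>x. x) = s n" using ea1 unfolding s_def \<mu>_def by (simp add: integral_distr)
    have iap: "integrable (\<mu> n) (\<lambda>x. \<bar>x\<bar> powr (2 + \<delta>))" unfolding \<mu>_def using intp[OF n0] by (simp add: integrable_distr_eq)
    have eap: "mu.expectation (\<lambda>x. \<bar>x\<bar> powr (2 + \<delta>)) \<le> K" unfolding \<mu>_def using boundp[OF n0] by (simp add: integral_distr)
    have phi_eq: "\<phi> n = (char (\<mu> n) (u n)) ^ n"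
      unfolding \<phi>_def \<mu>_def u_def by (rule char_row[OF P ind ident])
    have app: "cmod (char (\<mu> n) (u n) - (1 - (u n)^2 * s n / 2)) \<le>
        ((u n)^2 / 6) * mu.expectation (\<lambda>x. min (6 * x^2) (\<bar>u n\<bar> * \<bar>x\<bar>^3))"
      by (rule mu.char_approx3[OF ia1 ea1 ia2 va])
    have imin: "integrable (\<mu> n) (\<lambda>x. min (6 * x^2) (\<bar>u n\<bar> * \<bar>x\<bar>^3))"
      by (rule Bochner_Integration.integrable_bound[where f="\<lambda>x. 6 * x^2"]) (use ia2 in auto)
    have "mu.expectation (\<lambda>x. min (6 * x^2) (\<bar>u n\<bar> * \<bar>x\<bar>^3))
        \<le> mu.expectation (\<lambda>x. 6 * (\<bar>u n\<bar> powr \<delta> * \<bar>x\<bar> powr (2 + \<delta>)))"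
      by (rule integral_mono[OF imin]) (use iap d in \<open>auto intro!: min_powr_bound\<close>)
    also have "\<dots> = 6 * \<bar>u n\<bar> powr \<delta> * mu.expectation (\<lambda>x. \<bar>x\<bar> powr (2 + \<delta>))" by simp
    also have "\<dots> \<le> 6 * \<bar>u n\<bar> powr \<delta> * K" using eap by (intro mult_left_mono) auto
    finally have emin: "mu.expectation (\<lambda>x. min (6 * x^2) (\<bar>u n\<bar> * \<bar>x\<bar>^3)) \<le> 6 * \<bar>u n\<bar> powr \<delta> * K" .
    have u2: "(u n)^2 = t\<^sup>2 / (real n * V)" unfolding u_def using Vpos n0 by (simp add: power_divide)
    have weq: "1 - (u n)^2 * s n / 2 = 1 + a n / real n"
      unfolding u2 a_def using Vpos n0 by (simp add: field_simps)
    have a_le: "\<bar>a n\<bar> \<le> t\<^sup>2" unfolding a_def using sn Vpos s_nonneg[of n]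
      by (auto simp: abs_div abs_mult divide_le_eq mult_left_mono)
    have a_np: "a n \<le> 0" unfolding a_def using Vpos s_nonneg[of n] by (auto simp: divide_le_0_iff)
    have w_ok: "\<bar>1 + a n / real n\<bar> \<le> 1"
    proof -
      have "\<bar>a n / real n\<bar> \<le> 1" using a_le nt n0 by (auto simp: abs_div divide_le_eq)
      then show ?thesis using a_np n0 by (auto simp: abs_if divide_le_0_iff)
    qed
    have w0_ok: "\<bar>1 + a0 / real n\<bar> \<le> 1"
    proof -
      have "\<bar>a0 / real n\<bar> \<le> 1" using nt n0 unfolding a0_def by (auto simp: abs_div divide_le_eq)
      moreover have "a0 \<le> 0" unfolding a0_def by simp
      ultimately show ?thesis using n0 by (auto simp: abs_if divide_le_0_iff)
    qed
    have "cmod (\<phi> n - complex_of_real ((1 + a n / real n) ^ n))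
        = cmod ((char (\<mu> n) (u n)) ^ n - (complex_of_real (1 + a n / real n)) ^ n)"
      unfolding phi_eq by simp
    also have "\<dots> \<le> real n * cmod (char (\<mu> n) (u n) - complex_of_real (1 + a n / real n))"
    proof (rule norm_power_diff)
      show "cmod (char (\<mu> n) (u n)) \<le> 1" by (rule mu.cmod_char_le_1)
      show "cmod (complex_of_real (1 + a n / real n)) \<le> 1" unfolding norm_of_real by (rule w_ok)
    qed
    also have "\<dots> = real n * cmod (char (\<mu> n) (u n) - (1 - (u n)^2 * s n / 2))"
      unfolding weq[symmetric] by simp
    also have "\<dots> \<le> real n * (((u n)^2 / 6) * (6 * \<bar>u n\<bar> powr \<delta> * K))"
      using app emin by (intro mult_left_mono order_trans[OF app] mult_left_mono) auto
    also have "\<dots> = t\<^sup>2 / V * K * \<bar>u n\<bar> powr \<delta>"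
      unfolding u2 using n0 Vpos by (simp add: field_simps)
    finally have A: "cmod (\<phi> n - complex_of_real ((1 + a n / real n) ^ n)) \<le> t\<^sup>2 / V * K * \<bar>u n\<bar> powr \<delta>" .
    have "\<bar>(1 + a n / real n) ^ n - (1 + a0 / real n) ^ n\<bar> \<le> real n * \<bar>(1 + a n / real n) - (1 + a0 / real n)\<bar>"
      using norm_power_diff[of "1 + a n / real n" "1 + a0 / real n" n] w_ok w0_ok by simp
    also have "\<dots> = \<bar>a n - a0\<bar>" using n0 by (simp add: diff_divide_distrib[symmetric] abs_div)
    finally show ?thesis using A by simp
  qed
  have ev_good: "eventually (\<lambda>n. cmod (\<phi> n - complex_of_real ((1 + a n / real n) ^ n)) \<le> t\<^sup>2 / V * K * \<bar>u n\<bar> powr \<delta>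
           \<and> \<bar>(1 + a n / real n) ^ n - (1 + a0 / real n) ^ n\<bar> \<le> \<bar>a n - a0\<bar>) sequentially"
    using ev_s ev_n by eventually_elim (use good in auto)
  have u0: "u \<longlonglongrightarrow> 0"
    unfolding u_def using Vpos
    by (auto intro!: tendsto_divide_0[OF tendsto_const] filterlim_at_top_imp_at_infinity
        sqrt_at_top[THEN filterlim_compose] filterlim_at_top_mult_tendsto_pos filterlim_real_sequentially)
  have bnd0: "(\<lambda>n. t\<^sup>2 / V * K * \<bar>u n\<bar> powr \<delta>) \<longlonglongrightarrow> 0"
  proof -
    have "(\<lambda>n. \<bar>u n\<bar> powr \<delta>) \<longlonglongrightarrow> 0"
      by (rule tendsto_zero_powrI) (use u0 d in \<open>auto intro: tendsto_rabs_zero\<close>)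
    then show ?thesis using tendsto_mult_right_zero by blast
  qed
  have A: "(\<lambda>n. \<phi> n - complex_of_real ((1 + a n / real n) ^ n)) \<longlonglongrightarrow> 0"
    by (rule Lim_null_comparison[OF _ bnd0]) (use ev_good in \<open>auto elim: eventually_mono\<close>)
  have a_lim: "a \<longlonglongrightarrow> a0"
  proof -
    have "(\<lambda>n. -(t\<^sup>2 * s n) / (2 * V)) \<longlonglongrightarrow> -(t\<^sup>2 * V) / (2 * V)"
      using var[folded s_def] Vpos by (intro tendsto_intros) auto
    then show ?thesis unfolding a_def a0_def using Vpos by simp
  qed
  have B: "(\<lambda>n. (1 + a n / real n) ^ n - (1 + a0 / real n) ^ n) \<longlonglongrightarrow> 0"
  proof (rule Lim_null_comparison[where g="\<lambda>n. \<bar>a n - a0\<bar>"])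
    show "\<forall>\<^sub>F n in sequentially. norm ((1 + a n / real n) ^ n - (1 + a0 / real n) ^ n) \<le> \<bar>a n - a0\<bar>"
      using ev_good by (auto elim: eventually_mono)
    show "(\<lambda>n. \<bar>a n - a0\<bar>) \<longlonglongrightarrow> 0"
      using a_lim by (intro tendsto_rabs_zero) (simp add: LIM_zero)
  qed
  have C: "(\<lambda>n. (1 + a0 / real n) ^ n) \<longlonglongrightarrow> exp a0" by (rule tendsto_exp_limit_sequentially)
  have D: "(\<lambda>n. (1 + a n / real n) ^ n) \<longlonglongrightarrow> exp a0"
    using tendsto_add[OF B C] by simp
  have "(\<lambda>n. (\<phi> n - complex_of_real ((1 + a n / real n) ^ n)) + complex_of_real ((1 + a n / real n) ^ n))
      \<longlonglongrightarrow> 0 + complex_of_real (exp a0)"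
    by (intro tendsto_add A tendsto_of_real D)
  then have "\<phi> \<longlonglongrightarrow> complex_of_real (exp a0)" by simp
  then show "(\<lambda>n. char (distr (M n) borel (\<lambda>\<omega>. (\<Sum>i<n. X n i \<omega>) / sqrt (real n * V))) t)
      \<longlonglongrightarrow> char std_normal_distribution t"
    unfolding \<phi>_def a0_def char_std_normal_distribution by simp
qed

lemma std_normal_cdf_cont: "isCont (cdf std_normal_distribution) c"
proof -
  interpret real_distribution std_normal_distribution by (rule real_dist_normal_dist)
  have "emeasure std_normal_distribution {c} = 0"
    by (simp add: emeasure_density)
  then have "measure std_normal_distribution {c} = 0" by (simp add: measure_def)
  then show ?thesis by (simp add: isCont_cdf)
qed

lemma normal_cdf_affine:
  assumes b: "0 < b"
  shows "cdf (density lborel (normal_density a b)) x = cdf std_normal_distribution ((x - a) / b)"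
proof -
  let ?N = "std_normal_distribution"
  interpret N: prob_space ?N by (rule prob_space_normal_density) simp
  have d0: "distributed ?N lborel (\<lambda>x. x) std_normal_density"
    unfolding distributed_def by (auto simp: distr_id2)
  have "distributed ?N lborel (\<lambda>x. a + b * x) (normal_density (a + b * 0) (\<bar>b\<bar> * 1))"
    by (rule N.normal_density_affine[OF d0]) (use b in auto)
  then have deq: "distr ?N lborel (\<lambda>x. a + b * x) = density lborel (normal_density a b)"
    using b unfolding distributed_def by simp
  have "cdf (density lborel (normal_density a b)) x = measure (distr ?N lborel (\<lambda>x. a + b * x)) {..x}"
    unfolding deq cdf_def2 ..
  also have "\<dots> = measure ?N ((\<lambda>y. a + b * y) -` {..x} \<inter> space ?N)"
    by (rule measure_distr) auto
  also have "(\<lambda>y. a + b * y) -` {..x} \<inter> space ?N = {..(x - a) / b}"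
    using b by (auto simp: field_simps)
  also have "measure ?N {..(x - a) / b} = cdf ?N ((x - a) / b)" unfolding cdf_def2 ..
  finally show ?thesis .
qed

lemma slutsky_normal:
  fixes M :: "nat \<Rightarrow> 'a measure" and U W :: "nat \<Rightarrow> 'a \<Rightarrow> real"
  assumes P: "\<And>n. prob_space (M n)"
    and mU: "\<And>n. U n \<in> borel_measurable (M n)" and mW: "\<And>n. W n \<in> borel_measurable (M n)"
    and clt: "weak_conv_m (\<lambda>n. distr (M n) borel (U n)) std_normal_distribution"
    and b: "0 < b"
    and close: "\<And>\<delta> \<epsilon>. 0 < \<delta> \<Longrightarrow> 0 < \<epsilon> \<Longrightarrow>
       eventually (\<lambda>n. measure (M n) {\<omega> \<in> space (M n). \<delta> < \<bar>W n \<omega> - (a + b * U n \<omega>)\<bar>} \<le> \<epsilon>) sequentially"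
  shows "weak_conv_m (\<lambda>n. distr (M n) borel (W n)) (density lborel (normal_density a b))"
  unfolding weak_conv_m_def weak_conv_def
proof (intro allI impI)
  fix x :: real
  define \<Phi> where "\<Phi> = cdf std_normal_distribution"
  define c where "c = (x - a) / b"
  have GU: "(\<lambda>n. measure (M n) {\<omega> \<in> space (M n). U n \<omega> \<le> y}) \<longlonglongrightarrow> \<Phi> y" for y
  proof -
    have "(\<lambda>n. cdf (distr (M n) borel (U n)) y) \<longlonglongrightarrow> \<Phi> y"
      using clt std_normal_cdf_cont unfolding weak_conv_m_def weak_conv_def \<Phi>_def by blast
    moreover have "cdf (distr (M n) borel (U n)) y = measure (M n) {\<omega> \<in> space (M n). U n \<omega> \<le> y}" for n
      unfolding cdf_def2 using mU[of n] by (subst measure_distr) (auto intro!: arg_cong[where f="measure (M n)"])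
    ultimately show ?thesis by simp
  qed
  have cdfW: "cdf (distr (M n) borel (W n)) x = measure (M n) {\<omega> \<in> space (M n). W n \<omega> \<le> x}" for n
    unfolding cdf_def2 using mW[of n] by (subst measure_distr) (auto intro!: arg_cong[where f="measure (M n)"])
  have "(\<lambda>n. measure (M n) {\<omega> \<in> space (M n). W n \<omega> \<le> x}) \<longlonglongrightarrow> \<Phi> c"
  proof (rule tendstoI)
    fix e :: real assume e: "0 < e"
    have "(\<Phi> \<longlongrightarrow> \<Phi> c) (at c)" using std_normal_cdf_cont[of c] unfolding \<Phi>_def isCont_def .
    then obtain s where s: "0 < s" "\<And>y. y \<noteq> c \<and> norm (y - c) < s \<Longrightarrow> norm (\<Phi> y - \<Phi> c) < e / 4"
      using LIM_D[of \<Phi> "\<Phi> c" c "e/4"] e by auto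
    define h where "h = s / 2"
    have h: "0 < h" using s by (simp add: h_def)
    have Ph1: "\<bar>\<Phi> (c + h) - \<Phi> c\<bar> < e / 4" using s(2)[of "c + h"] h by (auto simp: h_def)
    have Ph2: "\<bar>\<Phi> (c - h) - \<Phi> c\<bar> < e / 4" using s(2)[of "c - h"] h by (auto simp: h_def)
    have E1: "eventually (\<lambda>n. measure (M n) {\<omega> \<in> space (M n). U n \<omega> \<le> c + h} < \<Phi> (c + h) + e / 4) sequentially"
      using order_tendstoD(2)[OF GU[of "c + h"], of "\<Phi> (c + h) + e / 4"] e by simp
    have E2: "eventually (\<lambda>n. \<Phi> (c - h) - e / 4 < measure (M n) {\<omega> \<in> space (M n). U n \<omega> \<le> c - h}) sequentially"
      using order_tendstoD(1)[OF GU[of "c - h"], of "\<Phi> (c - h) - e / 4"] e by simp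
    have E3: "eventually (\<lambda>n. measure (M n) {\<omega> \<in> space (M n). b * h < \<bar>W n \<omega> - (a + b * U n \<omega>)\<bar>} \<le> e / 4) sequentially"
      using close[of "b * h" "e / 4"] b h e by simp
    show "eventually (\<lambda>n. dist (measure (M n) {\<omega> \<in> space (M n). W n \<omega> \<le> x}) (\<Phi> c) < e) sequentially"
      using E1 E2 E3
    proof eventually_elim
      case (elim n)
      interpret Mn: prob_space "M n" by (rule P)
      have [measurable]: "U n \<in> borel_measurable (M n)" "W n \<in> borel_measurable (M n)" using mU mW by auto
      define B where "B = {\<omega> \<in> space (M n). b * h < \<bar>W n \<omega> - (a + b * U n \<omega>)\<bar>}"
      define AW where "AW = {\<omega> \<in> space (M n). W n \<omega> \<le> x}"
      define A1 where "A1 = {\<omega> \<in> space (M n). U n \<omega> \<le> c + h}"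
      define A2 where "A2 = {\<omega> \<in> space (M n). U n \<omega> \<le> c - h}"
      have sets: "B \<in> sets (M n)" "AW \<in> sets (M n)" "A1 \<in> sets (M n)" "A2 \<in> sets (M n)"
        unfolding B_def AW_def A1_def A2_def by measurable
      have sub1: "AW \<subseteq> A1 \<union> B"
      proof
        fix \<omega> assume "\<omega> \<in> AW"
        then have w: "\<omega> \<in> space (M n)" "W n \<omega> \<le> x" unfolding AW_def by auto
        show "\<omega> \<in> A1 \<union> B"
        proof (cases "\<omega> \<in> B")
          case False
          then have "\<bar>W n \<omega> - (a + b * U n \<omega>)\<bar> \<le> b * h" using w unfolding B_def by auto
          then have "b * U n \<omega> \<le> x - a + b * h" using w by linarith
          then have "U n \<omega> \<le> (x - a + b * h) / b" using b by (simp add: le_divide_eq mult.commute)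
          also have "\<dots> = c + h" using b unfolding c_def by (simp add: field_simps)
          finally show ?thesis using w unfolding A1_def by auto
        qed auto
      qed
      have sub2: "A2 \<subseteq> AW \<union> B"
      proof
        fix \<omega> assume "\<omega> \<in> A2"
        then have w: "\<omega> \<in> space (M n)" "U n \<omega> \<le> c - h" unfolding A2_def by auto
        show "\<omega> \<in> AW \<union> B"
        proof (cases "\<omega> \<in> B")
          case False
          then have "\<bar>W n \<omega> - (a + b * U n \<omega>)\<bar> \<le> b * h" using w unfolding B_def by auto
          moreover have "b * U n \<omega> \<le> b * (c - h)" using w b by (simp add: mult_left_mono)
          moreover have "b * (c - h) = x - a - b * h" using b unfolding c_def by (simp add: field_simps)
          ultimately have "W n \<omega> \<le> x" by linarith
          then show ?thesis using w unfolding AW_def by auto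
        qed auto
      qed
      have "measure (M n) AW \<le> measure (M n) (A1 \<union> B)" by (rule Mn.finite_measure_mono[OF sub1]) (use sets in auto)
      also have "\<dots> \<le> measure (M n) A1 + measure (M n) B" by (rule measure_subadditive) (use sets in auto)
      finally have up: "measure (M n) AW \<le> measure (M n) A1 + measure (M n) B" .
      have "measure (M n) A2 \<le> measure (M n) (AW \<union> B)" by (rule Mn.finite_measure_mono[OF sub2]) (use sets in auto)
      also have "\<dots> \<le> measure (M n) AW + measure (M n) B" by (rule measure_subadditive) (use sets in auto)
      finally have lo: "measure (M n) A2 \<le> measure (M n) AW + measure (M n) B" .
      have "measure (M n) AW < \<Phi> c + e" using up elim(1,3) Ph1 unfolding A1_def B_def by linarith
      moreover have "\<Phi> c - e < measure (M n) AW" using lo elim(2,3) Ph2 unfolding A2_def B_def by linarith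
      ultimately show ?case unfolding AW_def dist_real_def by linarith
    qed
  qed
  then show "(\<lambda>n. cdf (distr (M n) borel (W n)) x) \<longlonglongrightarrow> cdf (density lborel (normal_density a b)) x"
    unfolding cdfW normal_cdf_affine[OF b] \<Phi>_def c_def .
qed

lemma ZtZ_nth: "ZtZ n z $ j $ k = (\<Sum>i<n. z i $ j * z i $ k)"
  unfolding ZtZ_def outer_def by (simp add: sum_component)

lemma Zt_nth: "Zt n z a $ j = (\<Sum>i<n. a i * z i $ j)"
  unfolding Zt_def by (simp add: sum_component)

lemma ZtZ_sym: "ZtZ n z $ j $ k = ZtZ n z $ k $ j"
  unfolding ZtZ_nth by (simp add: mult.commute)

lemma sym_inner:
  fixes A :: "real^'k^'k"
  assumes "\<And>j k. A $ j $ k = A $ k $ j"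
  shows "(A *v p) \<bullet> q = p \<bullet> (A *v q)"
proof -
  have "(A *v p) \<bullet> q = (\<Sum>j\<in>UNIV. \<Sum>k\<in>UNIV. A $ j $ k * p $ k * q $ j)"
    by (simp add: inner_vec_def matrix_vector_mult_def sum_distrib_right sum_distrib_left ac_simps)
  also have "\<dots> = (\<Sum>k\<in>UNIV. \<Sum>j\<in>UNIV. A $ k $ j * p $ k * q $ j)"
    by (subst sum.swap) (simp add: assms)
  also have "\<dots> = p \<bullet> (A *v q)"
    by (simp add: inner_vec_def matrix_vector_mult_def sum_distrib_left mult.commute mult.left_commute)
  finally show ?thesis .
qed

lemma ZtZ_mult: "ZtZ n z *v p = Zt n z (\<lambda>i. z i \<bullet> p)"
  by (simp add: vec_eq_iff matrix_vector_mult_def ZtZ_nth Zt_nth inner_vec_def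
      sum_distrib_right sum_distrib_left mult.commute mult.left_commute) (subst sum.swap, simp add: mult.commute mult.left_commute)

lemma Zt_add: "Zt n z (\<lambda>i. a i + b i) = Zt n z a + Zt n z b"
  unfolding Zt_def by (simp add: scaleR_add_left sum.distrib)

lemma Zt_scale: "Zt n z (\<lambda>i. c * a i) = c *\<^sub>R Zt n z a"
  unfolding Zt_def by (simp add: scaleR_sum_right)

lemma inner_Zt: "p \<bullet> Zt n z a = (\<Sum>i<n. a i * (z i \<bullet> p))"
  unfolding Zt_def by (simp add: inner_sum_right inner_commute)

lemma quad_ZtZ: "p \<bullet> (ZtZ n z *v p) = (\<Sum>i<n. (z i \<bullet> p)\<^sup>2)"
  unfolding ZtZ_mult inner_Zt by (simp add: power2_eq_square)

lemma matrix_inv_props: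
  fixes A :: "real^'k^'k"
  assumes "invertible A"
  shows "A ** matrix_inv A = mat 1" "matrix_inv A ** A = mat 1"
proof -
  have "\<exists>A'. A ** A' = mat 1 \<and> A' ** A = mat 1" using assms unfolding invertible_def by blast
  then have "A ** matrix_inv A = mat 1 \<and> matrix_inv A ** A = mat 1"
    unfolding matrix_inv_def by (rule someI_ex)
  then show "A ** matrix_inv A = mat 1" "matrix_inv A ** A = mat 1" by auto
qed

lemma matrix_inv_mult:
  fixes A :: "real^'k^'k"
  assumes "invertible A"
  shows "A *v (matrix_inv A *v b) = b" "matrix_inv A *v (A *v b) = b"
  using matrix_inv_props[OF assms] by (simp_all add: matrix_vector_mul_assoc)

lemma quad_invertible:
  fixes A :: "real^'k^'k"
  assumes c: "0 < c" and q: "\<And>u. c * (norm u)\<^sup>2 \<le> u \<bullet> (A *v u)"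
  shows "invertible A" "norm (matrix_inv A *v b) \<le> norm b / c"
proof -
  have inj: "inj ((*v) A)"
  proof (rule linear_inj_on_iff_eq_0[THEN iffD2])
    show "linear ((*v) A)" by (rule matrix_vector_mul_linear)
    show "\<forall>x\<in>UNIV. A *v x = 0 \<longrightarrow> x = 0"
    proof (intro ballI impI)
      fix x assume "A *v x = 0"
      then have "c * (norm x)\<^sup>2 \<le> 0" using q[of x] by simp
      then show "x = 0" using c by (simp add: mult_le_0_iff)
    qed
  qed (simp add: subspace_UNIV)
  then have "surj ((*v) A)" by (intro linear_inj_imp_surj matrix_vector_mul_linear)
  then show inv: "invertible A" using inj by (simp add: invertible_eq_bij bij_def)
  define y where "y = matrix_inv A *v b"
  have Ay: "A *v y = b" unfolding y_def by (rule matrix_inv_mult(1)[OF inv])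
  have "c * (norm y)\<^sup>2 \<le> y \<bullet> b" using q[of y] Ay by simp
  also have "\<dots> \<le> norm y * norm b" by (rule norm_cauchy_schwarz)
  finally have *: "c * (norm y)\<^sup>2 \<le> norm y * norm b" .
  show "norm (matrix_inv A *v b) \<le> norm b / c"
  proof (cases "y = 0")
    case True then show ?thesis using c unfolding y_def by simp
  next
    case False
    then have ny: "norm y > 0" by simp
    from * have "(c * norm y) * norm y \<le> norm b * norm y" by (simp add: power2_eq_square mult.commute mult.left_commute)
    then have "c * norm y \<le> norm b" using ny by simp
    then show ?thesis using c unfolding y_def[symmetric] by (simp add: field_simps)
  qed
qed

lemma quad_perturb:
  fixes A Q :: "real^'k^'k"
  assumes "\<And>j k. \<bar>r * A $ j $ k - Q $ j $ k\<bar> \<le> eps"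
  shows "\<bar>r * (u \<bullet> (A *v u)) - u \<bullet> (Q *v u)\<bar> \<le> (real CARD('k))^2 * eps * (norm u)\<^sup>2"
proof -
  have e: "0 \<le> eps" using assms[of undefined undefined] by linarith
  have "r * (u \<bullet> (A *v u)) - u \<bullet> (Q *v u) = (\<Sum>j\<in>UNIV. \<Sum>k\<in>UNIV. u $ j * (r * A $ j $ k - Q $ j $ k) * u $ k)"
    by (simp add: inner_vec_def matrix_vector_mult_def sum_distrib_left sum_subtractf[symmetric]
        algebra_simps)
  also have "\<bar>\<dots>\<bar> \<le> (\<Sum>j\<in>(UNIV::'k set). \<Sum>k\<in>(UNIV::'k set). eps * (norm u)\<^sup>2)"
  proof -
    have "\<bar>u $ j * (r * A $ j $ k - Q $ j $ k) * u $ k\<bar> \<le> eps * (norm u)\<^sup>2" for j k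
    proof -
      have "\<bar>u $ j * (r * A $ j $ k - Q $ j $ k) * u $ k\<bar>
          = \<bar>r * A $ j $ k - Q $ j $ k\<bar> * (\<bar>u $ j\<bar> * \<bar>u $ k\<bar>)" by (simp add: abs_mult)
      also have "\<dots> \<le> eps * (norm u * norm u)"
        using assms e by (intro mult_mono component_le_norm_cart) auto
      finally show ?thesis by (simp add: power2_eq_square)
    qed
    then have prev: "\<forall>j. \<bar>\<Sum>k\<in>UNIV. u $ j * (r * A $ j $ k - Q $ j $ k) * u $ k\<bar> \<le> (\<Sum>k\<in>(UNIV::'k set). eps * (norm u)\<^sup>2)"
      by (intro allI order_trans[OF sum_abs] sum_mono) auto
    have "\<bar>\<Sum>j\<in>UNIV. \<Sum>k\<in>UNIV. u $ j * (r * A $ j $ k - Q $ j $ k) * u $ k\<bar>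
       \<le> (\<Sum>j\<in>UNIV. \<bar>\<Sum>k\<in>UNIV. u $ j * (r * A $ j $ k - Q $ j $ k) * u $ k\<bar>)" by (rule sum_abs)
    also have "\<dots> \<le> (\<Sum>j\<in>(UNIV::'k set). \<Sum>k\<in>(UNIV::'k set). eps * (norm u)\<^sup>2)"
      by (rule sum_mono) (use prev in blast)
    finally show ?thesis .
  qed
  also have "\<dots> = (real CARD('k))^2 * eps * (norm u)\<^sup>2" by (simp add: power2_eq_square)
  finally show ?thesis .
qed

lemma tau_hat_formula:
  fixes z :: "nat \<Rightarrow> real^'k" and v e :: "nat \<Rightarrow> real" and p :: "real^'k" and n :: nat and \<beta> :: real
  defines "A \<equiv> ZtZ n z" and "w \<equiv> Zt n z v" and "b \<equiv> Zt n z e"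
  assumes inv: "invertible A"
    and D: "p \<bullet> (A *v p) + 2 * (p \<bullet> w) + w \<bullet> (matrix_inv A *v w) \<noteq> 0"
  shows "tau_hat n z (\<lambda>i. z i \<bullet> p + v i) (\<lambda>i. \<beta> * (z i \<bullet> p + v i) + e i) =
     ((p \<bullet> b + (\<Sum>i<n. v i * e i)) - (\<Sum>i<n. (z i \<bullet> p + v i)\<^sup>2) * (p \<bullet> b + w \<bullet> (matrix_inv A *v b))
        / (p \<bullet> (A *v p) + 2 * (p \<bullet> w) + w \<bullet> (matrix_inv A *v w))) / sqrt (real n)"
proof -
  define Ai where "Ai = matrix_inv A"
  define x where "x i = z i \<bullet> p + v i" for i
  define y where "y i = \<beta> * x i + e i" for i
  define pxx where "pxx = p \<bullet> (A *v p) + 2 * (p \<bullet> w) + w \<bullet> (Ai *v w)"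
  define pxe where "pxe = p \<bullet> b + w \<bullet> (Ai *v b)"
  have sym: "\<And>j k. A $ j $ k = A $ k $ j" unfolding A_def by (rule ZtZ_sym)
  have AAi: "\<And>q. A *v (Ai *v q) = q" "\<And>q. Ai *v (A *v q) = q"
    unfolding Ai_def using matrix_inv_mult[OF inv] by auto
  have Ztx: "Zt n z x = A *v p + w"
    unfolding x_def A_def w_def ZtZ_mult by (rule Zt_add)
  have Zty: "Zt n z y = \<beta> *\<^sub>R (A *v p + w) + b"
    unfolding y_def b_def using Zt_add[of n z "\<lambda>i. \<beta> * x i" e] Zt_scale[of n z \<beta> x] Ztx by simp
  have key: "(A *v p + w) \<bullet> (Ai *v q) = p \<bullet> q + w \<bullet> (Ai *v q)" for q
    using sym_inner[of A p "Ai *v q", OF sym] AAi by (simp add: inner_add_left)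
  have pf: "projform n z x a = (A *v p + w) \<bullet> (Ai *v Zt n z a)" for a
    unfolding projform_def using inv Ztx by (simp add: A_def Ai_def)
  have pxx_eq: "projform n z x x = pxx"
  proof -
    have "projform n z x x = (A *v p + w) \<bullet> (Ai *v (A *v p + w))" using pf Ztx by simp
    also have "\<dots> = p \<bullet> (A *v p + w) + w \<bullet> (Ai *v (A *v p + w))" by (rule key)
    also have "\<dots> = p \<bullet> (A *v p) + 2 * (p \<bullet> w) + w \<bullet> (Ai *v w)"
      by (simp add: matrix_vector_right_distrib inner_add_right AAi inner_commute)
    finally show ?thesis unfolding pxx_def .
  qed
  have pxy_eq: "projform n z x y = \<beta> * pxx + pxe"
  proof -
    have "projform n z x y = (A *v p + w) \<bullet> (Ai *v (\<beta> *\<^sub>R (A *v p + w) + b))" using pf Zty by simp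
    also have "\<dots> = \<beta> * ((A *v p + w) \<bullet> (Ai *v (A *v p + w))) + (A *v p + w) \<bullet> (Ai *v b)"
      by (simp add: matrix_vector_right_distrib inner_add_right matrix_vector_mult_scaleR)
    also have "(A *v p + w) \<bullet> (Ai *v (A *v p + w)) = pxx" using pxx_eq pf Ztx by simp
    also have "(A *v p + w) \<bullet> (Ai *v b) = pxe" unfolding pxe_def by (rule key)
    finally show ?thesis .
  qed
  have pxx0: "pxx \<noteq> 0" using D unfolding pxx_def Ai_def .
  have bt: "beta_tsls n z x y = \<beta> + pxe / pxx"
    unfolding beta_tsls_def pxx_eq pxy_eq using pxx0 by (simp add: field_simps)
  have sxe: "(\<Sum>i<n. x i * e i) = p \<bullet> b + (\<Sum>i<n. v i * e i)"
    unfolding b_def inner_Zt x_def by (simp add: algebra_simps sum.distrib)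
  have "(\<Sum>i<n. x i * (y i - x i * beta_tsls n z x y)) = (\<Sum>i<n. x i * e i) - (\<Sum>i<n. (x i)\<^sup>2) * (pxe / pxx)"
    unfolding bt y_def by (simp add: algebra_simps power2_eq_square sum.distrib sum_subtractf sum_distrib_right sum_distrib_left sum_divide_distrib)
  then show ?thesis
    unfolding tau_hat_def x_def[symmetric] y_def[symmetric] using sxe
    by (simp add: pxe_def pxx_def Ai_def)
qed

lemma L5:
  fixes g sx P PK rho R Dn ED ah EA :: real
  assumes g: "0 < g" and sx: "0 \<le> sx"
    and hP: "\<bar>P\<bar> \<le> PK" and hr: "\<bar>rho\<bar> \<le> R"
    and hD: "\<bar>Dn - g\<bar> \<le> ED" and ED: "ED \<le> g / 2"
    and hA: "\<bar>ah - sx\<bar> \<le> EA" and EA: "EA \<le> 1"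
  shows "\<bar>sx / g * P - ah * (P + rho) / Dn\<bar> \<le> PK * 2 * (sx * ED + g * EA) / g\<^sup>2 + (sx + 1) * R * 2 / g"
proof -
  have Dn: "g / 2 \<le> Dn" using hD ED by linarith
  have Dpos: "0 < Dn" using Dn g by linarith
  have eq: "sx / g * P - ah * (P + rho) / Dn = P * ((sx * Dn - ah * g) / (g * Dn)) - ah * rho / Dn"
    using g Dpos by (simp add: field_simps)
  have n1: "\<bar>sx * Dn - ah * g\<bar> \<le> sx * ED + g * EA"
  proof -
    have "sx * Dn - ah * g = sx * (Dn - g) + g * (sx - ah)" by (simp add: algebra_simps)
    then have "\<bar>sx * Dn - ah * g\<bar> \<le> \<bar>sx * (Dn - g)\<bar> + \<bar>g * (sx - ah)\<bar>" by linarith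
    also have "\<dots> = sx * \<bar>Dn - g\<bar> + g * \<bar>ah - sx\<bar>" using sx g by (simp add: abs_mult abs_minus_commute)
    also have "\<dots> \<le> sx * ED + g * EA" using sx g hD hA by (intro add_mono mult_left_mono) auto
    finally show ?thesis .
  qed
  have inv1: "1 / (g * Dn) \<le> 2 / g\<^sup>2"
    using g Dn Dpos by (simp add: field_simps power2_eq_square)
  have t1: "\<bar>P * ((sx * Dn - ah * g) / (g * Dn))\<bar> \<le> PK * ((sx * ED + g * EA) * (2 / g\<^sup>2))"
  proof -
    have "\<bar>(sx * Dn - ah * g) / (g * Dn)\<bar> = \<bar>sx * Dn - ah * g\<bar> * (1 / (g * Dn))"
      using g Dpos by (simp add: abs_div)
    also have "\<dots> \<le> (sx * ED + g * EA) * (2 / g\<^sup>2)"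
      using n1 inv1 g Dpos by (intro mult_mono) auto
    finally have "\<bar>(sx * Dn - ah * g) / (g * Dn)\<bar> \<le> (sx * ED + g * EA) * (2 / g\<^sup>2)" .
    then show ?thesis unfolding abs_mult using hP by (intro mult_mono) auto
  qed
  have t2: "\<bar>ah * rho / Dn\<bar> \<le> (sx + 1) * R * (2 / g)"
  proof -
    have a: "\<bar>ah\<bar> \<le> sx + 1" using hA EA sx by linarith
    have "\<bar>ah * rho / Dn\<bar> = \<bar>ah\<bar> * \<bar>rho\<bar> * (1 / Dn)" using Dpos by (simp add: abs_mult abs_div)
    also have "\<dots> \<le> (sx + 1) * R * (2 / g)"
    proof (rule mult_mono)
      show "\<bar>ah\<bar> * \<bar>rho\<bar> \<le> (sx + 1) * R" using a hr sx by (intro mult_mono) auto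
      show "1 / Dn \<le> 2 / g" using Dn g Dpos by (simp add: field_simps)
      show "0 \<le> (sx + 1) * R" using sx hr by (intro mult_nonneg_nonneg) auto
    qed (use Dpos in auto)
    finally show ?thesis .
  qed
  have "\<bar>sx / g * P - ah * (P + rho) / Dn\<bar> \<le> \<bar>P * ((sx * Dn - ah * g) / (g * Dn))\<bar> + \<bar>ah * rho / Dn\<bar>"
    unfolding eq by (rule abs_triangle_ineq4)
  also have "\<dots> \<le> PK * ((sx * ED + g * EA) * (2 / g\<^sup>2)) + (sx + 1) * R * (2 / g)" using t1 t2 by linarith
  also have "\<dots> = PK * 2 * (sx * ED + g * EA) / g\<^sup>2 + (sx + 1) * R * 2 / g" by simp
  finally show ?thesis .
qed

lemma projform_cramer:
  "projform n z a b = (if det (ZtZ n z) = 0 then 0 else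
     (\<Sum>k\<in>UNIV. Zt n z a $ k * (det (\<chi> i j. if j = k then Zt n z b $ i else ZtZ n z $ i $ j) / det (ZtZ n z))))"
proof (cases "det (ZtZ n z) = 0")
  case True then show ?thesis unfolding projform_def by (simp add: invertible_det_nz)
next
  case False
  then have inv: "invertible (ZtZ n z)" by (simp add: invertible_det_nz)
  have "ZtZ n z *v (matrix_inv (ZtZ n z) *v Zt n z b) = Zt n z b" by (rule matrix_inv_mult(1)[OF inv])
  then have "matrix_inv (ZtZ n z) *v Zt n z b = (\<chi> k. det (\<chi> i j. if j = k then Zt n z b $ i else ZtZ n z $ i $ j) / det (ZtZ n z))"
    using cramer[OF False] by blast
  then show ?thesis unfolding projform_def using inv False by (simp add: inner_vec_def)
qed

lemma meas_det:
  fixes F :: "'k::finite \<Rightarrow> 'k \<Rightarrow> 'a \<Rightarrow> real"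
  assumes "\<And>i j. F i j \<in> borel_measurable M"
  shows "(\<lambda>\<omega>. det ((\<chi> i j. F i j \<omega>) :: real^'k^'k)) \<in> borel_measurable M"
  unfolding det_def using assms by simp measurable

lemma meas_projform:
  fixes z :: "nat \<Rightarrow> 'a \<Rightarrow> real^'k"
  assumes z: "\<And>i j. (\<lambda>\<omega>. z i \<omega> $ j) \<in> borel_measurable M"
    and a: "\<And>i. a i \<in> borel_measurable M" and b: "\<And>i. b i \<in> borel_measurable M"
  shows "(\<lambda>\<omega>. projform n (\<lambda>i. z i \<omega>) (\<lambda>i. a i \<omega>) (\<lambda>i. b i \<omega>)) \<in> borel_measurable M"
proof -
  have [measurable]: "(\<lambda>\<omega>. z i \<omega> $ j) \<in> borel_measurable M" "a i \<in> borel_measurable M" "b i \<in> borel_measurable M" for i j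
    using z a b by auto
  have d1: "(\<lambda>\<omega>. det (ZtZ n (\<lambda>i. z i \<omega>))) \<in> borel_measurable M"
  proof -
    have "(\<lambda>\<omega>. det ((\<chi> j k. \<Sum>i<n. z i \<omega> $ j * z i \<omega> $ k) :: real^'k^'k)) \<in> borel_measurable M"
      by (rule meas_det) measurable
    moreover have "ZtZ n (\<lambda>i. z i \<omega>) = (\<chi> j k. \<Sum>i<n. z i \<omega> $ j * z i \<omega> $ k)" for \<omega>
      by (simp add: vec_eq_iff ZtZ_nth)
    ultimately show ?thesis by simp
  qed
  have d2: "(\<lambda>\<omega>. det (\<chi> i j. if j = k then Zt n (\<lambda>i. z i \<omega>) (\<lambda>i. b i \<omega>) $ i else ZtZ n (\<lambda>i. z i \<omega>) $ i $ j))
      \<in> borel_measurable M" for k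
    unfolding Zt_nth ZtZ_nth by (rule meas_det) measurable
  have za: "(\<lambda>\<omega>. Zt n (\<lambda>i. z i \<omega>) (\<lambda>i. a i \<omega>) $ k) \<in> borel_measurable M" for k
    unfolding Zt_nth by measurable
  show ?thesis unfolding projform_cramer using d1 d2 za by measurable
qed

lemma meas_tau_hat:
  fixes z :: "nat \<Rightarrow> 'a \<Rightarrow> real^'k"
  assumes z: "\<And>i j. (\<lambda>\<omega>. z i \<omega> $ j) \<in> borel_measurable M"
    and a: "\<And>i. x i \<in> borel_measurable M" and b: "\<And>i. y i \<in> borel_measurable M"
  shows "(\<lambda>\<omega>. tau_hat n (\<lambda>i. z i \<omega>) (\<lambda>i. x i \<omega>) (\<lambda>i. y i \<omega>)) \<in> borel_measurable M"
proof -
  have [measurable]: "x i \<in> borel_measurable M" "y i \<in> borel_measurable M" for i using a b by auto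
  have [measurable]: "(\<lambda>\<omega>. projform n (\<lambda>i. z i \<omega>) (\<lambda>i. x i \<omega>) (\<lambda>i. y i \<omega>)) \<in> borel_measurable M"
    "(\<lambda>\<omega>. projform n (\<lambda>i. z i \<omega>) (\<lambda>i. x i \<omega>) (\<lambda>i. x i \<omega>)) \<in> borel_measurable M"
    by (rule meas_projform[OF z a]; rule a b)+
  show ?thesis unfolding tau_hat_def beta_tsls_def by measurable
qed

lemma pos_def_lower:
  fixes Q :: "real^'k^'k"
  assumes "pos_def_mat Q"
  shows "\<exists>lam>0. \<forall>u. lam * (norm u)\<^sup>2 \<le> u \<bullet> (Q *v u)"
proof -
  let ?f = "\<lambda>u::real^'k. u \<bullet> (Q *v u)"
  have ne: "sphere (0::real^'k) 1 \<noteq> {}" by simp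
  have cont: "continuous_on (sphere 0 1) ?f"
  proof -
    have bl: "bounded_linear ((*v) Q)" using matrix_vector_mul_linear[of Q] linear_linear by blast
    have "continuous_on (sphere 0 1) ((*v) Q)" by (rule linear_continuous_on[OF bl])
    then show ?thesis by (intro continuous_intros)
  qed
  obtain x0 where x0: "x0 \<in> sphere 0 1" "\<And>y. y \<in> sphere 0 1 \<Longrightarrow> ?f x0 \<le> ?f y"
    using continuous_attains_inf[OF compact_sphere ne cont] by blast
  have "x0 \<noteq> 0" using x0(1) by auto
  then have pos: "?f x0 > 0" using assms unfolding pos_def_mat_def by blast
  have "?f x0 * (norm u)\<^sup>2 \<le> ?f u" for u
  proof (cases "u = 0")
    case True then show ?thesis by simp
  next
    case False
    let ?v = "(1 / norm u) *\<^sub>R u"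
    have "?v \<in> sphere 0 1" using False by simp
    then have "?f x0 \<le> ?f ?v" by (rule x0(2))
    also have "?f ?v = ?f u / (norm u)\<^sup>2"
      by (simp add: matrix_vector_mult_scaleR power2_eq_square)
    finally show ?thesis using False by (simp add: field_simps)
  qed
  then show ?thesis using pos by blast
qed

lemma borel_measurable_vec_lambda:
  fixes g :: "'k::finite \<Rightarrow> 'a \<Rightarrow> 'b::euclidean_space"
  assumes "\<And>i. g i \<in> borel_measurable M"
  shows "(\<lambda>\<omega>. \<chi> i. g i \<omega>) \<in> borel_measurable M"
proof (subst borel_measurable_euclidean_space, intro ballI)
  fix b :: "'b^'k" assume "b \<in> Basis"
  then obtain i u where b: "b = axis i u" "u \<in> Basis" unfolding Basis_vec_def by auto
  have "(\<lambda>\<omega>. g i \<omega> \<bullet> u) \<in> borel_measurable M" using assms[of i] by measurable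
  then show "(\<lambda>x. (\<chi> i. g i x) \<bullet> b) \<in> borel_measurable M" unfolding b by (simp add: inner_axis)
qed

lemma integrable_vec_comp:
  fixes f :: "'a \<Rightarrow> 'b::euclidean_space^'k"
  assumes "f \<in> borel_measurable M" "\<And>j. integrable M (\<lambda>\<omega>. f \<omega> $ j)"
  shows "integrable M f"
proof (rule Bochner_Integration.integrable_bound[where f="\<lambda>\<omega>. \<Sum>j\<in>UNIV. norm (f \<omega> $ j)"])
  show "integrable M (\<lambda>\<omega>. \<Sum>j\<in>UNIV. norm (f \<omega> $ j))" using assms(2) by auto
  show "f \<in> borel_measurable M" by fact
  show "AE \<omega> in M. norm (f \<omega>) \<le> norm (\<Sum>j\<in>UNIV. norm (f \<omega> $ j))"
  proof (intro AE_I2)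
    fix \<omega>
    have "norm (f \<omega>) \<le> (\<Sum>j\<in>UNIV. norm (f \<omega> $ j))"
      unfolding norm_vec_def by (rule L2_set_le_sum) simp
    then show "norm (f \<omega>) \<le> norm (\<Sum>j\<in>UNIV. norm (f \<omega> $ j))" by simp
  qed
qed

lemma integral_vec_comp:
  fixes f :: "'a \<Rightarrow> 'b::euclidean_space^'k"
  assumes "integrable M f"
  shows "(integral\<^sup>L M f) $ j = (\<integral>\<omega>. f \<omega> $ j \<partial>M)"
  using integral_bounded_linear[OF bounded_linear_vec_nth assms] by simp

lemma nn_to_int:
  fixes f :: "'a \<Rightarrow> real"
  assumes "f \<in> borel_measurable M" "\<And>\<omega>. 0 \<le> f \<omega>" "(\<integral>\<^sup>+\<omega>. ennreal (f \<omega>) \<partial>M) \<le> ennreal C"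
  shows "integrable M f" "(\<integral>\<omega>. f \<omega> \<partial>M) \<le> max 0 C"
proof -
  have le: "(\<integral>\<^sup>+\<omega>. ennreal (f \<omega>) \<partial>M) \<le> ennreal (max 0 C)" using assms(3) by (simp add: ennreal_max_0)
  then have fin: "(\<integral>\<^sup>+\<omega>. ennreal (f \<omega>) \<partial>M) < \<infinity>" using le_less_trans by fastforce
  show "integrable M f" by (rule integrableI_nonneg) (use assms fin in auto)
  have "(\<integral>\<omega>. f \<omega> \<partial>M) = enn2real (\<integral>\<^sup>+\<omega>. ennreal (f \<omega>) \<partial>M)"
    by (rule integral_eq_nn_integral) (use assms in auto)
  also have "\<dots> \<le> enn2real (ennreal (max 0 C))" by (rule enn2real_mono[OF le]) simp
  also have "\<dots> = max 0 C" by (rule enn2real_ennreal) simp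
  finally show "(\<integral>\<omega>. f \<omega> \<partial>M) \<le> max 0 C" .
qed

lemma max4_powr:
  fixes a b c q :: real
  assumes "0 \<le> a" "0 \<le> b" "0 \<le> c" "0 < q"
  shows "(max 1 (max a (max b c))) powr q \<le> 1 + a powr q + b powr q + c powr q"
proof -
  have nn: "0 \<le> a powr q" "0 \<le> b powr q" "0 \<le> c powr q" by auto
  have "max 1 (max a (max b c)) \<in> {1, a, b, c}" by (auto simp: max_def)
  then show ?thesis using nn by auto
qed

lemma powr_mono_ge1: "1 \<le> (x::real) \<Longrightarrow> r \<le> q \<Longrightarrow> x powr r \<le> x powr q"
  by (rule powr_mono) auto

lemma pow4_powr: "1 \<le> (x::real) \<Longrightarrow> 4 \<le> q \<Longrightarrow> x ^ 4 \<le> x powr q"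
  using powr_mono_ge1[of x 4 q] by (simp add: powr_realpow)

locale tsls =
  fixes M :: "nat \<Rightarrow> 'a measure"
    and z :: "nat \<Rightarrow> nat \<Rightarrow> 'a \<Rightarrow> real^'k"
    and v eps x y :: "nat \<Rightarrow> nat \<Rightarrow> 'a \<Rightarrow> real"
    and \<pi> :: "real^'k" and Q :: "real^'k^'k"
    and \<beta> \<tau> \<sigma>v2 \<sigma>e2 :: real
  assumes prob: "\<And>n. prob_space (M n)"
    and meas_z: "\<And>n i. z n i \<in> borel_measurable (M n)"
    and meas_v: "\<And>n i. v n i \<in> borel_measurable (M n)"
    and meas_e: "\<And>n i. eps n i \<in> borel_measurable (M n)"
    and indep: "\<And>n. prob_space.indep_vars (M n) (\<lambda>_. borel)
                   (\<lambda>i \<omega>. (z n i \<omega>, v n i \<omega>, eps n i \<omega>)) {..<n}"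
    and ident: "\<And>n i. i < n \<Longrightarrow>
                   distr (M n) borel (\<lambda>\<omega>. (z n i \<omega>, v n i \<omega>, eps n i \<omega>))
                 = distr (M n) borel (\<lambda>\<omega>. (z n 0 \<omega>, v n 0 \<omega>, eps n 0 \<omega>))"
    and ze: "\<And>n i. i < n \<Longrightarrow> (\<integral>\<omega>. eps n i \<omega> *\<^sub>R z n i \<omega> \<partial>M n) = 0"
    and zv: "\<And>n i. i < n \<Longrightarrow> (\<integral>\<omega>. v n i \<omega> *\<^sub>R z n i \<omega> \<partial>M n) = 0"
    and ev: "\<And>n i. i < n \<Longrightarrow> (\<integral>\<omega>. eps n i \<omega> * v n i \<omega> \<partial>M n) = \<tau> / sqrt (real n)"
    and moments: "\<exists>\<eta>>0. \<exists>C. \<forall>n i. i < n \<longrightarrow>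
        (\<integral>\<^sup>+\<omega>. ennreal (norm (z n i \<omega>) powr (4 + \<eta>)) \<partial>M n) \<le> ennreal C \<and>
        (\<integral>\<^sup>+\<omega>. ennreal (\<bar>eps n i \<omega>\<bar> powr (4 + \<eta>)) \<partial>M n) \<le> ennreal C \<and>
        (\<integral>\<^sup>+\<omega>. ennreal (\<bar>v n i \<omega>\<bar> powr (4 + \<eta>)) \<partial>M n) \<le> ennreal C"
    and lim_Q: "(\<lambda>n. \<integral>\<omega>. outer (z n 0 \<omega>) (z n 0 \<omega>) \<partial>M n) \<longlonglongrightarrow> Q"
    and Q_pos: "pos_def_mat Q"
    and lim_v: "(\<lambda>n. \<integral>\<omega>. (v n 0 \<omega>)\<^sup>2 \<partial>M n) \<longlonglongrightarrow> \<sigma>v2" and \<sigma>v2_pos: "\<sigma>v2 > 0"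
    and lim_e: "(\<lambda>n. \<integral>\<omega>. (eps n 0 \<omega>)\<^sup>2 \<partial>M n) \<longlonglongrightarrow> \<sigma>e2" and \<sigma>e2_pos: "\<sigma>e2 > 0"
    and e1: "(\<lambda>n. (\<integral>\<omega>. (eps n 0 \<omega>)\<^sup>2 *\<^sub>R outer (z n 0 \<omega>) (z n 0 \<omega>) \<partial>M n)
               - (\<integral>\<omega>. (eps n 0 \<omega>)\<^sup>2 \<partial>M n) *\<^sub>R (\<integral>\<omega>. outer (z n 0 \<omega>) (z n 0 \<omega>) \<partial>M n))
             \<longlonglongrightarrow> 0"
    and e2: "(\<lambda>n. (\<integral>\<omega>. ((eps n 0 \<omega>)\<^sup>2 * v n 0 \<omega>) *\<^sub>R z n 0 \<omega> \<partial>M n)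
               - (\<integral>\<omega>. (eps n 0 \<omega>)\<^sup>2 \<partial>M n) *\<^sub>R (\<integral>\<omega>. v n 0 \<omega> *\<^sub>R z n 0 \<omega> \<partial>M n))
             \<longlonglongrightarrow> 0"
    and e3: "(\<lambda>n. (\<integral>\<omega>. (eps n 0 \<omega>)\<^sup>2 * (v n 0 \<omega>)\<^sup>2 \<partial>M n)
               - (\<integral>\<omega>. (eps n 0 \<omega>)\<^sup>2 \<partial>M n) * (\<integral>\<omega>. (v n 0 \<omega>)\<^sup>2 \<partial>M n))
             \<longlonglongrightarrow> 0"
    and x_def: "\<And>n i \<omega>. x n i \<omega> = z n i \<omega> \<bullet> \<pi> + v n i \<omega>"
    and \<pi>_nz: "\<pi> \<noteq> 0"
    and y_def: "\<And>n i \<omega>. y n i \<omega> = \<beta> * x n i \<omega> + eps n i \<omega>"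
begin

definition "eta = (SOME \<eta>. \<eta> > 0 \<and> (\<exists>C. \<forall>n i. i < n \<longrightarrow>
        (\<integral>\<^sup>+\<omega>. ennreal (norm (z n i \<omega>) powr (4 + \<eta>)) \<partial>M n) \<le> ennreal C \<and>
        (\<integral>\<^sup>+\<omega>. ennreal (\<bar>eps n i \<omega>\<bar> powr (4 + \<eta>)) \<partial>M n) \<le> ennreal C \<and>
        (\<integral>\<^sup>+\<omega>. ennreal (\<bar>v n i \<omega>\<bar> powr (4 + \<eta>)) \<partial>M n) \<le> ennreal C))"

definition "C0 = (SOME C. \<forall>n i. i < n \<longrightarrow>
        (\<integral>\<^sup>+\<omega>. ennreal (norm (z n i \<omega>) powr (4 + eta)) \<partial>M n) \<le> ennreal C \<and>
        (\<integral>\<^sup>+\<omega>. ennreal (\<bar>eps n i \<omega>\<bar> powr (4 + eta)) \<partial>M n) \<le> ennreal C \<and>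
        (\<integral>\<^sup>+\<omega>. ennreal (\<bar>v n i \<omega>\<bar> powr (4 + eta)) \<partial>M n) \<le> ennreal C)"

lemma eta_C0:
  "eta > 0" "\<forall>n i. i < n \<longrightarrow>
        (\<integral>\<^sup>+\<omega>. ennreal (norm (z n i \<omega>) powr (4 + eta)) \<partial>M n) \<le> ennreal C0 \<and>
        (\<integral>\<^sup>+\<omega>. ennreal (\<bar>eps n i \<omega>\<bar> powr (4 + eta)) \<partial>M n) \<le> ennreal C0 \<and>
        (\<integral>\<^sup>+\<omega>. ennreal (\<bar>v n i \<omega>\<bar> powr (4 + eta)) \<partial>M n) \<le> ennreal C0"
proof -
  have *: "eta > 0 \<and> (\<exists>C. \<forall>n i. i < n \<longrightarrow>
        (\<integral>\<^sup>+\<omega>. ennreal (norm (z n i \<omega>) powr (4 + eta)) \<partial>M n) \<le> ennreal C \<and>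
        (\<integral>\<^sup>+\<omega>. ennreal (\<bar>eps n i \<omega>\<bar> powr (4 + eta)) \<partial>M n) \<le> ennreal C \<and>
        (\<integral>\<^sup>+\<omega>. ennreal (\<bar>v n i \<omega>\<bar> powr (4 + eta)) \<partial>M n) \<le> ennreal C)"
    unfolding eta_def by (rule someI_ex) (use moments in blast)
  then show "eta > 0" by (rule conjunct1)
  from * have ex: "\<exists>C. \<forall>n i. i < n \<longrightarrow>
        (\<integral>\<^sup>+\<omega>. ennreal (norm (z n i \<omega>) powr (4 + eta)) \<partial>M n) \<le> ennreal C \<and>
        (\<integral>\<^sup>+\<omega>. ennreal (\<bar>eps n i \<omega>\<bar> powr (4 + eta)) \<partial>M n) \<le> ennreal C \<and>
        (\<integral>\<^sup>+\<omega>. ennreal (\<bar>v n i \<omega>\<bar> powr (4 + eta)) \<partial>M n) \<le> ennreal C" by (rule conjunct2)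
  show "\<forall>n i. i < n \<longrightarrow>
        (\<integral>\<^sup>+\<omega>. ennreal (norm (z n i \<omega>) powr (4 + eta)) \<partial>M n) \<le> ennreal C0 \<and>
        (\<integral>\<^sup>+\<omega>. ennreal (\<bar>eps n i \<omega>\<bar> powr (4 + eta)) \<partial>M n) \<le> ennreal C0 \<and>
        (\<integral>\<^sup>+\<omega>. ennreal (\<bar>v n i \<omega>\<bar> powr (4 + eta)) \<partial>M n) \<le> ennreal C0"
    unfolding C0_def using ex by (rule someI_ex)
qed

definition "q = 4 + eta"
definition "Cm = max 0 C0"
definition "mm n \<omega> = max 1 (max (norm (z n 0 \<omega>)) (max \<bar>eps n 0 \<omega>\<bar> \<bar>v n 0 \<omega>\<bar>))"
definition "Dm n \<omega> = 1 + norm (z n 0 \<omega>) powr q + \<bar>eps n 0 \<omega>\<bar> powr q + \<bar>v n 0 \<omega>\<bar> powr q"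

lemma q_ge: "4 \<le> q" "0 < q" using eta_C0(1) unfolding q_def by auto

lemma meas[measurable]:
  "z n i \<in> borel_measurable (M n)" "v n i \<in> borel_measurable (M n)" "eps n i \<in> borel_measurable (M n)"
  using meas_z meas_v meas_e by auto

lemma meas_comp[measurable]: "(\<lambda>\<omega>. z n i \<omega> $ j) \<in> borel_measurable (M n)"
  by (rule measurable_compose[OF meas_z borel_measurable_nth])

lemma Dm_nonneg: "0 \<le> Dm n \<omega>" unfolding Dm_def by simp

lemma meas_Dm[measurable]: "Dm n \<in> borel_measurable (M n)"
  unfolding Dm_def by measurable

lemma Dm_int: assumes "0 < n" shows "integrable (M n) (Dm n)" "(\<integral>\<omega>. Dm n \<omega> \<partial>M n) \<le> 1 + 3 * Cm"
proof -
  interpret prob_space "M n" by (rule prob)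
  have m: "(\<integral>\<^sup>+\<omega>. ennreal (norm (z n 0 \<omega>) powr q) \<partial>M n) \<le> ennreal C0"
          "(\<integral>\<^sup>+\<omega>. ennreal (\<bar>eps n 0 \<omega>\<bar> powr q) \<partial>M n) \<le> ennreal C0"
          "(\<integral>\<^sup>+\<omega>. ennreal (\<bar>v n 0 \<omega>\<bar> powr q) \<partial>M n) \<le> ennreal C0"
    using eta_C0(2) assms unfolding q_def by auto
  note a = nn_to_int[OF _ _ m(1)] nn_to_int[OF _ _ m(2)] nn_to_int[OF _ _ m(3)]
  have i: "integrable (M n) (\<lambda>\<omega>. norm (z n 0 \<omega>) powr q)" "integrable (M n) (\<lambda>\<omega>. \<bar>eps n 0 \<omega>\<bar> powr q)"
      "integrable (M n) (\<lambda>\<omega>. \<bar>v n 0 \<omega>\<bar> powr q)" using a by auto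
  have b: "(\<integral>\<omega>. norm (z n 0 \<omega>) powr q \<partial>M n) \<le> Cm" "(\<integral>\<omega>. \<bar>eps n 0 \<omega>\<bar> powr q \<partial>M n) \<le> Cm"
      "(\<integral>\<omega>. \<bar>v n 0 \<omega>\<bar> powr q \<partial>M n) \<le> Cm" using a unfolding Cm_def by auto
  show "integrable (M n) (Dm n)" unfolding Dm_def using i by auto
  show "(\<integral>\<omega>. Dm n \<omega> \<partial>M n) \<le> 1 + 3 * Cm" unfolding Dm_def using i b by (simp add: prob_space)
qed

lemma mm_props:
  "1 \<le> mm n \<omega>" "norm (z n 0 \<omega>) \<le> mm n \<omega>" "\<bar>eps n 0 \<omega>\<bar> \<le> mm n \<omega>" "\<bar>v n 0 \<omega>\<bar> \<le> mm n \<omega>"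
  "\<bar>z n 0 \<omega> $ j\<bar> \<le> mm n \<omega>" "mm n \<omega> powr q \<le> Dm n \<omega>" "(mm n \<omega>)^4 \<le> Dm n \<omega>"
proof -
  show "1 \<le> mm n \<omega>" "norm (z n 0 \<omega>) \<le> mm n \<omega>" "\<bar>eps n 0 \<omega>\<bar> \<le> mm n \<omega>" "\<bar>v n 0 \<omega>\<bar> \<le> mm n \<omega>"
    unfolding mm_def by (simp_all add: le_max_iff_disj)
  then show "\<bar>z n 0 \<omega> $ j\<bar> \<le> mm n \<omega>" using component_le_norm_cart order_trans by blast
  show *: "mm n \<omega> powr q \<le> Dm n \<omega>" unfolding mm_def Dm_def by (rule max4_powr) (use q_ge in auto)
  show "(mm n \<omega>)^4 \<le> Dm n \<omega>" using pow4_powr[OF \<open>1 \<le> mm n \<omega>\<close> q_ge(1)] * by linarith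
qed

lemma intD:
  fixes f :: "'a \<Rightarrow> real"
  assumes n: "0 < n" and f: "f \<in> borel_measurable (M n)" and K: "0 \<le> K" and b: "\<And>\<omega>. \<bar>f \<omega>\<bar> \<le> K * Dm n \<omega>"
  shows "integrable (M n) f" "\<bar>\<integral>\<omega>. f \<omega> \<partial>M n\<bar> \<le> K * (1 + 3 * Cm)"
proof -
  show I: "integrable (M n) f"
  proof (rule Bochner_Integration.integrable_bound[where f="\<lambda>\<omega>. K * Dm n \<omega>"])
    show "AE x in M n. norm (f x) \<le> norm (K * Dm n x)"
      using b K Dm_nonneg by (intro AE_I2) (simp add: abs_mult)
  qed (use Dm_int[OF n] f in auto)
  have "\<bar>\<integral>\<omega>. f \<omega> \<partial>M n\<bar> \<le> (\<integral>\<omega>. \<bar>f \<omega>\<bar> \<partial>M n)" by (rule integral_abs_bound)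
  also have "\<dots> \<le> (\<integral>\<omega>. K * Dm n \<omega> \<partial>M n)" by (rule integral_mono) (use I Dm_int[OF n] b in auto)
  also have "\<dots> = K * (\<integral>\<omega>. Dm n \<omega> \<partial>M n)" by simp
  also have "\<dots> \<le> K * (1 + 3 * Cm)" using Dm_int[OF n] K by (intro mult_left_mono) auto
  finally show "\<bar>\<integral>\<omega>. f \<omega> \<partial>M n\<bar> \<le> K * (1 + 3 * Cm)" .
qed

end

lemma prod4_bound:
  fixes a b c d m :: real
  assumes "1 \<le> m" "\<bar>a\<bar> \<le> m" "\<bar>b\<bar> \<le> m" "\<bar>c\<bar> \<le> m" "\<bar>d\<bar> \<le> m"
  shows "\<bar>a * b * c * d\<bar> \<le> m ^ 4"
proof -
  have "\<bar>a * b * c * d\<bar> = \<bar>a\<bar> * \<bar>b\<bar> * \<bar>c\<bar> * \<bar>d\<bar>" by (simp add: abs_mult)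
  also have "\<dots> \<le> m * m * m * m" using assms by (intro mult_mono) auto
  finally show ?thesis by (simp add: power4_eq_xxxx)
qed

lemma meas_outer[measurable]:
  assumes [measurable]: "f \<in> borel_measurable N" "g \<in> borel_measurable N"
  shows "(\<lambda>\<omega>. outer (f \<omega>) (g \<omega>) :: real^'k^'k) \<in> borel_measurable N"
  unfolding outer_def
  by (intro borel_measurable_vec_lambda) (measurable, rule measurable_compose[OF _ borel_measurable_nth], simp)+

lemma measurable_vec_nth_gen[measurable (raw)]:
  fixes f :: "'a \<Rightarrow> 'b::euclidean_space^'k"
  assumes "f \<in> borel_measurable M"
  shows "(\<lambda>\<omega>. f \<omega> $ j) \<in> borel_measurable M"
proof (subst borel_measurable_euclidean_space, intro ballI)
  fix u :: 'b assume "u \<in> Basis"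
  have "(\<lambda>\<omega>. f \<omega> \<bullet> axis j u) \<in> borel_measurable M" using assms by measurable
  then show "(\<lambda>\<omega>. f \<omega> $ j \<bullet> u) \<in> borel_measurable M" by (simp add: inner_axis)
qed

lemma integrable_mat_comp:
  fixes f :: "'a \<Rightarrow> real^'k^'k"
  assumes "f \<in> borel_measurable M" "\<And>j k. integrable M (\<lambda>\<omega>. f \<omega> $ j $ k)"
  shows "integrable M f"
proof (rule integrable_vec_comp[OF assms(1)])
  fix j
  have "(\<lambda>\<omega>. f \<omega> $ j) \<in> borel_measurable M"
    by (rule measurable_vec_nth_gen[OF assms(1)])
  then show "integrable M (\<lambda>\<omega>. f \<omega> $ j)" by (rule integrable_vec_comp) (rule assms(2))
qed

lemma integral_mat_comp:
  fixes f :: "'a \<Rightarrow> real^'k^'k"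
  assumes "integrable M f"
  shows "(integral\<^sup>L M f) $ j $ k = (\<integral>\<omega>. f \<omega> $ j $ k \<partial>M)"
proof -
  have i: "integrable M (\<lambda>\<omega>. f \<omega> $ j)" by (rule integrable_bounded_linear[OF bounded_linear_vec_nth assms])
  show ?thesis using integral_vec_comp[OF assms, of j] integral_vec_comp[OF i, of k] by simp
qed

context tsls
begin

lemma int4:
  assumes n: "0 < n" and f: "f \<in> borel_measurable (M n)"
    and b: "\<And>\<omega>. \<exists>a b c d. f \<omega> = a * b * c * d \<and> \<bar>a\<bar> \<le> mm n \<omega> \<and> \<bar>b\<bar> \<le> mm n \<omega> \<and> \<bar>c\<bar> \<le> mm n \<omega> \<and> \<bar>d\<bar> \<le> mm n \<omega>"
  shows "integrable (M n) f" "\<bar>\<integral>\<omega>. f \<omega> \<partial>M n\<bar> \<le> 1 + 3 * Cm"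
proof -
  have "\<bar>f \<omega>\<bar> \<le> 1 * Dm n \<omega>" for \<omega>
  proof -
    obtain a b c d where "f \<omega> = a * b * c * d" "\<bar>a\<bar> \<le> mm n \<omega>" "\<bar>b\<bar> \<le> mm n \<omega>" "\<bar>c\<bar> \<le> mm n \<omega>" "\<bar>d\<bar> \<le> mm n \<omega>"
      using b by blast
    then have "\<bar>f \<omega>\<bar> \<le> (mm n \<omega>)^4" using prod4_bound mm_props(1) by metis
    then show ?thesis using mm_props(7)[of n \<omega>] by simp
  qed
  note r = intD[OF n f _ this]
  show "integrable (M n) f" using r by simp
  show "\<bar>\<integral>\<omega>. f \<omega> \<partial>M n\<bar> \<le> 1 + 3 * Cm" using r by simp
qed

lemma int4':
  assumes n: "0 < n" and f: "f \<in> borel_measurable (M n)"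
    and eq: "\<And>\<omega>. f \<omega> = a \<omega> * b \<omega> * c \<omega> * d \<omega>"
    and "\<And>\<omega>. \<bar>a \<omega>\<bar> \<le> mm n \<omega>" "\<And>\<omega>. \<bar>b \<omega>\<bar> \<le> mm n \<omega>" "\<And>\<omega>. \<bar>c \<omega>\<bar> \<le> mm n \<omega>" "\<And>\<omega>. \<bar>d \<omega>\<bar> \<le> mm n \<omega>"
  shows "integrable (M n) f" "\<bar>\<integral>\<omega>. f \<omega> \<partial>M n\<bar> \<le> 1 + 3 * Cm"
  by (rule int4[OF n f]; use assms in blast)+

lemma one_le_mm: "\<bar>1\<bar> \<le> mm n \<omega>" using mm_props(1) by simp

lemmas mmb = mm_props(3,4,5) one_le_mm

lemma Ezz: assumes n: "0 < n"
  shows "integrable (M n) (\<lambda>\<omega>. z n 0 \<omega> $ j * z n 0 \<omega> $ k)"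
    "(\<integral>\<omega>. outer (z n 0 \<omega>) (z n 0 \<omega>) \<partial>M n) $ j $ k = (\<integral>\<omega>. z n 0 \<omega> $ j * z n 0 \<omega> $ k \<partial>M n)"
proof -
  have I: "integrable (M n) (\<lambda>\<omega>. z n 0 \<omega> $ j * z n 0 \<omega> $ k)" for j k
    apply (rule int4'(1)[OF n _ _ mmb(3)[where j=j] mmb(3)[where j=k] mmb(4) mmb(4)])
    subgoal by measurable
    subgoal by simp
    done
  then show "integrable (M n) (\<lambda>\<omega>. z n 0 \<omega> $ j * z n 0 \<omega> $ k)" .
  have "integrable (M n) (\<lambda>\<omega>. outer (z n 0 \<omega>) (z n 0 \<omega>))"
    by (rule integrable_mat_comp) (measurable, use I in \<open>simp add: outer_def\<close>)
  then show "(\<integral>\<omega>. outer (z n 0 \<omega>) (z n 0 \<omega>) \<partial>M n) $ j $ k = (\<integral>\<omega>. z n 0 \<omega> $ j * z n 0 \<omega> $ k \<partial>M n)"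
    by (simp add: integral_mat_comp outer_def)
qed


lemma vecint:
  assumes n: "0 < n" and f[measurable]: "f \<in> borel_measurable (M n)" and g[measurable]: "g \<in> borel_measurable (M n)"
    and b: "\<And>\<omega> j. \<exists>a b c d. f \<omega> * g \<omega> $ j = a * b * c * d \<and> \<bar>a\<bar> \<le> mm n \<omega> \<and> \<bar>b\<bar> \<le> mm n \<omega> \<and> \<bar>c\<bar> \<le> mm n \<omega> \<and> \<bar>d\<bar> \<le> mm n \<omega>"
  shows "integrable (M n) (\<lambda>\<omega>. f \<omega> * g \<omega> $ j)"
    "(\<integral>\<omega>. f \<omega> *\<^sub>R g \<omega> \<partial>M n) $ j = (\<integral>\<omega>. f \<omega> * g \<omega> $ j \<partial>M n)"
proof -
  have I: "integrable (M n) (\<lambda>\<omega>. f \<omega> * g \<omega> $ j)" for j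
    by (rule int4(1)[OF n]) (measurable, use b in blast)
  then show "integrable (M n) (\<lambda>\<omega>. f \<omega> * g \<omega> $ j)" .
  have "integrable (M n) (\<lambda>\<omega>. f \<omega> *\<^sub>R g \<omega>)"
    by (rule integrable_vec_comp) (measurable, use I in simp)
  then show "(\<integral>\<omega>. f \<omega> *\<^sub>R g \<omega> \<partial>M n) $ j = (\<integral>\<omega>. f \<omega> * g \<omega> $ j \<partial>M n)"
    by (simp add: integral_vec_comp)
qed

lemma Eez: assumes n: "0 < n"
  shows "integrable (M n) (\<lambda>\<omega>. eps n 0 \<omega> * z n 0 \<omega> $ j)" "(\<integral>\<omega>. eps n 0 \<omega> * z n 0 \<omega> $ j \<partial>M n) = 0"
proof -
  note r = vecint[OF n meas_e meas_z, of 0 0 j]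
  have b: "\<exists>a b c d. eps n 0 \<omega> * z n 0 \<omega> $ j = a * b * c * d \<and> \<bar>a\<bar> \<le> mm n \<omega> \<and> \<bar>b\<bar> \<le> mm n \<omega> \<and> \<bar>c\<bar> \<le> mm n \<omega> \<and> \<bar>d\<bar> \<le> mm n \<omega>" for \<omega> j
    using mmb by (intro exI[of _ "eps n 0 \<omega>"] exI[of _ "z n 0 \<omega> $ j"] exI[of _ 1]) auto
  show "integrable (M n) (\<lambda>\<omega>. eps n 0 \<omega> * z n 0 \<omega> $ j)" using r b by blast
  show "(\<integral>\<omega>. eps n 0 \<omega> * z n 0 \<omega> $ j \<partial>M n) = 0" using r(2)[OF b] ze[of 0 n] n by simp
qed

lemma Evz: assumes n: "0 < n"
  shows "integrable (M n) (\<lambda>\<omega>. v n 0 \<omega> * z n 0 \<omega> $ j)" "(\<integral>\<omega>. v n 0 \<omega> * z n 0 \<omega> $ j \<partial>M n) = 0"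
proof -
  note r = vecint[OF n meas_v meas_z, of 0 0 j]
  have b: "\<exists>a b c d. v n 0 \<omega> * z n 0 \<omega> $ j = a * b * c * d \<and> \<bar>a\<bar> \<le> mm n \<omega> \<and> \<bar>b\<bar> \<le> mm n \<omega> \<and> \<bar>c\<bar> \<le> mm n \<omega> \<and> \<bar>d\<bar> \<le> mm n \<omega>" for \<omega> j
    using mmb by (intro exI[of _ "v n 0 \<omega>"] exI[of _ "z n 0 \<omega> $ j"] exI[of _ 1]) auto
  show "integrable (M n) (\<lambda>\<omega>. v n 0 \<omega> * z n 0 \<omega> $ j)" using r b by blast
  show "(\<integral>\<omega>. v n 0 \<omega> * z n 0 \<omega> $ j \<partial>M n) = 0" using r(2)[OF b] zv[of 0 n] n by simp
qed

lemma Ee2vz: assumes n: "0 < n"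
  shows "integrable (M n) (\<lambda>\<omega>. ((eps n 0 \<omega>)\<^sup>2 * v n 0 \<omega>) * z n 0 \<omega> $ j)"
    "(\<integral>\<omega>. ((eps n 0 \<omega>)\<^sup>2 * v n 0 \<omega>) *\<^sub>R z n 0 \<omega> \<partial>M n) $ j = (\<integral>\<omega>. ((eps n 0 \<omega>)\<^sup>2 * v n 0 \<omega>) * z n 0 \<omega> $ j \<partial>M n)"
proof -
  have m: "(\<lambda>\<omega>. (eps n 0 \<omega>)\<^sup>2 * v n 0 \<omega>) \<in> borel_measurable (M n)" by measurable
  note r = vecint[OF n m meas_z, of 0 j]
  have b: "\<exists>a b c d. ((eps n 0 \<omega>)\<^sup>2 * v n 0 \<omega>) * z n 0 \<omega> $ j = a * b * c * d \<and> \<bar>a\<bar> \<le> mm n \<omega> \<and> \<bar>b\<bar> \<le> mm n \<omega> \<and> \<bar>c\<bar> \<le> mm n \<omega> \<and> \<bar>d\<bar> \<le> mm n \<omega>" for \<omega> j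
    using mmb by (intro exI[of _ "eps n 0 \<omega>"] exI[of _ "eps n 0 \<omega>"] exI[of _ "v n 0 \<omega>"] exI[of _ "z n 0 \<omega> $ j"]) (auto simp: power2_eq_square)
  show "integrable (M n) (\<lambda>\<omega>. ((eps n 0 \<omega>)\<^sup>2 * v n 0 \<omega>) * z n 0 \<omega> $ j)" using r b by blast
  show "(\<integral>\<omega>. ((eps n 0 \<omega>)\<^sup>2 * v n 0 \<omega>) *\<^sub>R z n 0 \<omega> \<partial>M n) $ j = (\<integral>\<omega>. ((eps n 0 \<omega>)\<^sup>2 * v n 0 \<omega>) * z n 0 \<omega> $ j \<partial>M n)"
    using r(2)[OF b] by simp
qed

lemma Ee2zz: assumes n: "0 < n"
  shows "integrable (M n) (\<lambda>\<omega>. (eps n 0 \<omega>)\<^sup>2 * (z n 0 \<omega> $ j * z n 0 \<omega> $ k))"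
    "(\<integral>\<omega>. (eps n 0 \<omega>)\<^sup>2 *\<^sub>R outer (z n 0 \<omega>) (z n 0 \<omega>) \<partial>M n) $ j $ k = (\<integral>\<omega>. (eps n 0 \<omega>)\<^sup>2 * (z n 0 \<omega> $ j * z n 0 \<omega> $ k) \<partial>M n)"
proof -
  have I: "integrable (M n) (\<lambda>\<omega>. (eps n 0 \<omega>)\<^sup>2 * (z n 0 \<omega> $ j * z n 0 \<omega> $ k))" for j k
    by (rule int4'(1)[OF n _ _ mmb(1) mmb(1) mmb(3)[where j=j] mmb(3)[where j=k]]) (measurable, simp add: power2_eq_square)
  then show "integrable (M n) (\<lambda>\<omega>. (eps n 0 \<omega>)\<^sup>2 * (z n 0 \<omega> $ j * z n 0 \<omega> $ k))" .
  have "integrable (M n) (\<lambda>\<omega>. (eps n 0 \<omega>)\<^sup>2 *\<^sub>R outer (z n 0 \<omega>) (z n 0 \<omega>))"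
    by (rule integrable_mat_comp) (measurable, use I in \<open>simp add: outer_def\<close>)
  then show "(\<integral>\<omega>. (eps n 0 \<omega>)\<^sup>2 *\<^sub>R outer (z n 0 \<omega>) (z n 0 \<omega>) \<partial>M n) $ j $ k = (\<integral>\<omega>. (eps n 0 \<omega>)\<^sup>2 * (z n 0 \<omega> $ j * z n 0 \<omega> $ k) \<partial>M n)"
    by (simp add: integral_mat_comp outer_def)
qed

lemma Isc: assumes n: "0 < n"
  shows "integrable (M n) (\<lambda>\<omega>. (eps n 0 \<omega>)\<^sup>2)" "integrable (M n) (\<lambda>\<omega>. (v n 0 \<omega>)\<^sup>2)"
    "integrable (M n) (\<lambda>\<omega>. eps n 0 \<omega> * v n 0 \<omega>)" "integrable (M n) (\<lambda>\<omega>. (eps n 0 \<omega>)\<^sup>2 * (v n 0 \<omega>)\<^sup>2)"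
proof -
  show "integrable (M n) (\<lambda>\<omega>. (eps n 0 \<omega>)\<^sup>2)"
    by (rule int4'(1)[OF n _ _ mmb(1) mmb(1) mmb(4) mmb(4)]) (measurable, simp add: power2_eq_square)
  show "integrable (M n) (\<lambda>\<omega>. (v n 0 \<omega>)\<^sup>2)"
    by (rule int4'(1)[OF n _ _ mmb(2) mmb(2) mmb(4) mmb(4)]) (measurable, simp add: power2_eq_square)
  show "integrable (M n) (\<lambda>\<omega>. eps n 0 \<omega> * v n 0 \<omega>)"
    apply (rule int4'(1)[OF n _ _ mmb(1) mmb(2) mmb(4) mmb(4)])
    subgoal by measurable
    subgoal by simp
    done
  show "integrable (M n) (\<lambda>\<omega>. (eps n 0 \<omega>)\<^sup>2 * (v n 0 \<omega>)\<^sup>2)"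
    by (rule int4'(1)[OF n _ _ mmb(1) mmb(1) mmb(2) mmb(2)]) (measurable, simp add: power2_eq_square)
qed

lemma ev_pos: "eventually (\<lambda>n. 0 < n) sequentially"
  using eventually_gt_at_top by blast

lemma L_zz: "(\<lambda>n. \<integral>\<omega>. z n 0 \<omega> $ j * z n 0 \<omega> $ k \<partial>M n) \<longlonglongrightarrow> Q $ j $ k"
proof -
  have "(\<lambda>n. (\<integral>\<omega>. outer (z n 0 \<omega>) (z n 0 \<omega>) \<partial>M n) $ j $ k) \<longlonglongrightarrow> Q $ j $ k"
    by (intro tendsto_vec_nth lim_Q)
  moreover have "eventually (\<lambda>n. (\<integral>\<omega>. outer (z n 0 \<omega>) (z n 0 \<omega>) \<partial>M n) $ j $ k = (\<integral>\<omega>. z n 0 \<omega> $ j * z n 0 \<omega> $ k \<partial>M n)) sequentially"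
    using ev_pos by eventually_elim (rule Ezz(2))
  ultimately show ?thesis using tendsto_cong by force
qed

lemma L_e2zz: "(\<lambda>n. \<integral>\<omega>. (eps n 0 \<omega>)\<^sup>2 * (z n 0 \<omega> $ j * z n 0 \<omega> $ k) \<partial>M n) \<longlonglongrightarrow> \<sigma>e2 * Q $ j $ k"
proof -
  have a: "(\<lambda>n. ((\<integral>\<omega>. (eps n 0 \<omega>)\<^sup>2 *\<^sub>R outer (z n 0 \<omega>) (z n 0 \<omega>) \<partial>M n)
               - (\<integral>\<omega>. (eps n 0 \<omega>)\<^sup>2 \<partial>M n) *\<^sub>R (\<integral>\<omega>. outer (z n 0 \<omega>) (z n 0 \<omega>) \<partial>M n)) $ j $ k) \<longlonglongrightarrow> 0"
    using tendsto_vec_nth[OF tendsto_vec_nth[OF e1]] by simp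
  have b: "(\<lambda>n. (\<integral>\<omega>. (eps n 0 \<omega>)\<^sup>2 \<partial>M n) * (\<integral>\<omega>. outer (z n 0 \<omega>) (z n 0 \<omega>) \<partial>M n) $ j $ k) \<longlonglongrightarrow> \<sigma>e2 * Q $ j $ k"
    by (intro tendsto_mult lim_e tendsto_vec_nth lim_Q)
  have "(\<lambda>n. ((\<integral>\<omega>. (eps n 0 \<omega>)\<^sup>2 *\<^sub>R outer (z n 0 \<omega>) (z n 0 \<omega>) \<partial>M n)
               - (\<integral>\<omega>. (eps n 0 \<omega>)\<^sup>2 \<partial>M n) *\<^sub>R (\<integral>\<omega>. outer (z n 0 \<omega>) (z n 0 \<omega>) \<partial>M n)) $ j $ k
       + (\<integral>\<omega>. (eps n 0 \<omega>)\<^sup>2 \<partial>M n) * (\<integral>\<omega>. outer (z n 0 \<omega>) (z n 0 \<omega>) \<partial>M n) $ j $ k) \<longlonglongrightarrow> 0 + \<sigma>e2 * Q $ j $ k"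
    by (rule tendsto_add[OF a b])
  moreover have "eventually (\<lambda>n. ((\<integral>\<omega>. (eps n 0 \<omega>)\<^sup>2 *\<^sub>R outer (z n 0 \<omega>) (z n 0 \<omega>) \<partial>M n)
               - (\<integral>\<omega>. (eps n 0 \<omega>)\<^sup>2 \<partial>M n) *\<^sub>R (\<integral>\<omega>. outer (z n 0 \<omega>) (z n 0 \<omega>) \<partial>M n)) $ j $ k
       + (\<integral>\<omega>. (eps n 0 \<omega>)\<^sup>2 \<partial>M n) * (\<integral>\<omega>. outer (z n 0 \<omega>) (z n 0 \<omega>) \<partial>M n) $ j $ k
      = (\<integral>\<omega>. (eps n 0 \<omega>)\<^sup>2 * (z n 0 \<omega> $ j * z n 0 \<omega> $ k) \<partial>M n)) sequentially"
    using ev_pos by eventually_elim (simp add: Ee2zz)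
  ultimately show ?thesis using tendsto_cong by force
qed

lemma L_e2vz: "(\<lambda>n. \<integral>\<omega>. ((eps n 0 \<omega>)\<^sup>2 * v n 0 \<omega>) * z n 0 \<omega> $ j \<partial>M n) \<longlonglongrightarrow> 0"
proof -
  have a: "(\<lambda>n. ((\<integral>\<omega>. ((eps n 0 \<omega>)\<^sup>2 * v n 0 \<omega>) *\<^sub>R z n 0 \<omega> \<partial>M n)
               - (\<integral>\<omega>. (eps n 0 \<omega>)\<^sup>2 \<partial>M n) *\<^sub>R (\<integral>\<omega>. v n 0 \<omega> *\<^sub>R z n 0 \<omega> \<partial>M n)) $ j) \<longlonglongrightarrow> 0"
    using tendsto_vec_nth[OF e2] by simp
  moreover have "eventually (\<lambda>n. ((\<integral>\<omega>. ((eps n 0 \<omega>)\<^sup>2 * v n 0 \<omega>) *\<^sub>R z n 0 \<omega> \<partial>M n)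
               - (\<integral>\<omega>. (eps n 0 \<omega>)\<^sup>2 \<partial>M n) *\<^sub>R (\<integral>\<omega>. v n 0 \<omega> *\<^sub>R z n 0 \<omega> \<partial>M n)) $ j
      = (\<integral>\<omega>. ((eps n 0 \<omega>)\<^sup>2 * v n 0 \<omega>) * z n 0 \<omega> $ j \<partial>M n)) sequentially"
    using ev_pos by eventually_elim (simp add: Ee2vz zv)
  ultimately show ?thesis using tendsto_cong by force
qed

lemma L_e2v2: "(\<lambda>n. \<integral>\<omega>. (eps n 0 \<omega>)\<^sup>2 * (v n 0 \<omega>)\<^sup>2 \<partial>M n) \<longlonglongrightarrow> \<sigma>e2 * \<sigma>v2"
  using tendsto_add[OF e3 tendsto_mult[OF lim_e lim_v]] by simp

end

context tsls
begin

definition "\<gamma>2 = \<pi> \<bullet> (Q *v \<pi>)"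
definition "\<sigma>x2 = \<gamma>2 + \<sigma>v2"
definition "a0 = 1 - \<sigma>x2 / \<gamma>2"
definition "VV = \<sigma>e2 * \<sigma>x2 * (\<sigma>v2 / \<gamma>2)"
definition "Yf (t :: (real^'k) \<times> real \<times> real) = a0 * (fst t \<bullet> \<pi>) * snd (snd t) + fst (snd t) * snd (snd t)"
definition "mu n = \<tau> / sqrt (real n)"
definition "XX n i \<omega> = Yf (z n i \<omega>, v n i \<omega>, eps n i \<omega>) - mu n"
definition "dd = min 1 (eta / 2)"
definition "K0 = \<bar>a0\<bar> * norm \<pi> + 1 + \<bar>\<tau>\<bar>"

lemma \<gamma>2_pos: "0 < \<gamma>2" using Q_pos \<pi>_nz unfolding pos_def_mat_def \<gamma>2_def by auto

lemma VV_pos: "0 < VV" unfolding VV_def \<sigma>x2_def using \<gamma>2_pos \<sigma>v2_pos \<sigma>e2_pos by auto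

lemma VV_eq: "VV = a0\<^sup>2 * \<sigma>e2 * \<gamma>2 + \<sigma>e2 * \<sigma>v2"
  unfolding VV_def a0_def \<sigma>x2_def using \<gamma>2_pos by (simp add: field_simps power2_eq_square)

lemma Yf_meas[measurable]: "Yf \<in> borel_measurable borel"
  unfolding Yf_def by (intro borel_measurable_continuous_onI continuous_intros)

lemma XX_meas[measurable]: "XX n i \<in> borel_measurable (M n)"
  unfolding XX_def by measurable

lemma Y_expand: "Yf (z n 0 \<omega>, v n 0 \<omega>, eps n 0 \<omega>) =
   (\<Sum>j\<in>UNIV. (a0 * \<pi> $ j) * (eps n 0 \<omega> * z n 0 \<omega> $ j)) + eps n 0 \<omega> * v n 0 \<omega>"
  unfolding Yf_def by (simp add: inner_vec_def sum_distrib_left sum_distrib_right mult_ac)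

lemma Y_sq_expand: "(Yf (z n 0 \<omega>, v n 0 \<omega>, eps n 0 \<omega>))\<^sup>2 =
   (\<Sum>j\<in>UNIV. \<Sum>k\<in>UNIV. (a0\<^sup>2 * \<pi> $ j * \<pi> $ k) * ((eps n 0 \<omega>)\<^sup>2 * (z n 0 \<omega> $ j * z n 0 \<omega> $ k)))
   + (\<Sum>j\<in>UNIV. (2 * a0 * \<pi> $ j) * (((eps n 0 \<omega>)\<^sup>2 * v n 0 \<omega>) * z n 0 \<omega> $ j))
   + (eps n 0 \<omega>)\<^sup>2 * (v n 0 \<omega>)\<^sup>2"
proof -
  define s where "s = (\<Sum>j\<in>UNIV. z n 0 \<omega> $ j * \<pi> $ j)"
  have "Yf (z n 0 \<omega>, v n 0 \<omega>, eps n 0 \<omega>) = a0 * s * eps n 0 \<omega> + v n 0 \<omega> * eps n 0 \<omega>"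
    unfolding Yf_def s_def by (simp add: inner_vec_def)
  moreover have "s * s = (\<Sum>j\<in>UNIV. \<Sum>k\<in>UNIV. (z n 0 \<omega> $ j * \<pi> $ j) * (z n 0 \<omega> $ k * \<pi> $ k))"
    unfolding s_def by (simp add: sum_product)
  ultimately show ?thesis
    unfolding power2_eq_square
    by (simp add: algebra_simps sum_distrib_left sum_distrib_right sum.distrib s_def)
qed

lemma EY: assumes n: "0 < n"
  shows "integrable (M n) (\<lambda>\<omega>. Yf (z n 0 \<omega>, v n 0 \<omega>, eps n 0 \<omega>))"
    "(\<integral>\<omega>. Yf (z n 0 \<omega>, v n 0 \<omega>, eps n 0 \<omega>) \<partial>M n) = mu n"
proof -
  have I: "integrable (M n) (\<lambda>\<omega>. (\<Sum>j\<in>UNIV. (a0 * \<pi> $ j) * (eps n 0 \<omega> * z n 0 \<omega> $ j)) + eps n 0 \<omega> * v n 0 \<omega>)"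
    using Eez[OF n] Isc[OF n] by auto
  then show "integrable (M n) (\<lambda>\<omega>. Yf (z n 0 \<omega>, v n 0 \<omega>, eps n 0 \<omega>))" unfolding Y_expand .
  have "(\<integral>\<omega>. Yf (z n 0 \<omega>, v n 0 \<omega>, eps n 0 \<omega>) \<partial>M n) =
     (\<integral>\<omega>. (\<Sum>j\<in>UNIV. (a0 * \<pi> $ j) * (eps n 0 \<omega> * z n 0 \<omega> $ j)) + eps n 0 \<omega> * v n 0 \<omega> \<partial>M n)"
    unfolding Y_expand ..
  also have "\<dots> = (\<Sum>j\<in>UNIV. (a0 * \<pi> $ j) * (\<integral>\<omega>. eps n 0 \<omega> * z n 0 \<omega> $ j \<partial>M n)) + (\<integral>\<omega>. eps n 0 \<omega> * v n 0 \<omega> \<partial>M n)"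
    using Eez[OF n] Isc[OF n] by (simp add: Bochner_Integration.integral_sum)
  also have "\<dots> = mu n" using Eez[OF n] ev[of 0 n] n unfolding mu_def by simp
  finally show "(\<integral>\<omega>. Yf (z n 0 \<omega>, v n 0 \<omega>, eps n 0 \<omega>) \<partial>M n) = mu n" .
qed

lemma EY2: assumes n: "0 < n"
  shows "integrable (M n) (\<lambda>\<omega>. (Yf (z n 0 \<omega>, v n 0 \<omega>, eps n 0 \<omega>))\<^sup>2)"
    "(\<integral>\<omega>. (Yf (z n 0 \<omega>, v n 0 \<omega>, eps n 0 \<omega>))\<^sup>2 \<partial>M n) =
      (\<Sum>j\<in>UNIV. \<Sum>k\<in>UNIV. (a0\<^sup>2 * \<pi> $ j * \<pi> $ k) * (\<integral>\<omega>. (eps n 0 \<omega>)\<^sup>2 * (z n 0 \<omega> $ j * z n 0 \<omega> $ k) \<partial>M n))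
   + (\<Sum>j\<in>UNIV. (2 * a0 * \<pi> $ j) * (\<integral>\<omega>. ((eps n 0 \<omega>)\<^sup>2 * v n 0 \<omega>) * z n 0 \<omega> $ j \<partial>M n))
   + (\<integral>\<omega>. (eps n 0 \<omega>)\<^sup>2 * (v n 0 \<omega>)\<^sup>2 \<partial>M n)"
  unfolding Y_sq_expand using Ee2zz[OF n] Ee2vz[OF n] Isc[OF n]
  by (simp_all add: Bochner_Integration.integral_sum Bochner_Integration.integral_add Bochner_Integration.integrable_sum)

lemma lim_EY2: "(\<lambda>n. \<integral>\<omega>. (Yf (z n 0 \<omega>, v n 0 \<omega>, eps n 0 \<omega>))\<^sup>2 \<partial>M n) \<longlonglongrightarrow> VV"
proof -
  have "(\<lambda>n. (\<Sum>j\<in>UNIV. \<Sum>k\<in>UNIV. (a0\<^sup>2 * \<pi> $ j * \<pi> $ k) * (\<integral>\<omega>. (eps n 0 \<omega>)\<^sup>2 * (z n 0 \<omega> $ j * z n 0 \<omega> $ k) \<partial>M n))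
   + (\<Sum>j\<in>UNIV. (2 * a0 * \<pi> $ j) * (\<integral>\<omega>. ((eps n 0 \<omega>)\<^sup>2 * v n 0 \<omega>) * z n 0 \<omega> $ j \<partial>M n))
   + (\<integral>\<omega>. (eps n 0 \<omega>)\<^sup>2 * (v n 0 \<omega>)\<^sup>2 \<partial>M n))
    \<longlonglongrightarrow> (\<Sum>j\<in>UNIV. \<Sum>k\<in>UNIV. (a0\<^sup>2 * \<pi> $ j * \<pi> $ k) * (\<sigma>e2 * Q $ j $ k))
      + (\<Sum>j\<in>(UNIV::'k set). (2 * a0 * \<pi> $ j) * 0) + \<sigma>e2 * \<sigma>v2"
    by (intro tendsto_add tendsto_sum tendsto_mult tendsto_const L_e2zz L_e2vz L_e2v2)
  moreover have "(\<Sum>j\<in>UNIV. \<Sum>k\<in>UNIV. (a0\<^sup>2 * \<pi> $ j * \<pi> $ k) * (\<sigma>e2 * Q $ j $ k))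
      + (\<Sum>j\<in>(UNIV::'k set). (2 * a0 * \<pi> $ j) * 0) + \<sigma>e2 * \<sigma>v2 = VV"
  proof -
    have "\<gamma>2 = (\<Sum>j\<in>UNIV. \<Sum>k\<in>UNIV. \<pi> $ j * \<pi> $ k * Q $ j $ k)"
      unfolding \<gamma>2_def by (simp add: inner_vec_def matrix_vector_mult_def sum_distrib_left mult_ac)
    then show ?thesis unfolding VV_eq by (simp add: sum_distrib_left mult_ac)
  qed
  moreover have "eventually (\<lambda>n. (\<integral>\<omega>. (Yf (z n 0 \<omega>, v n 0 \<omega>, eps n 0 \<omega>))\<^sup>2 \<partial>M n) =
      (\<Sum>j\<in>UNIV. \<Sum>k\<in>UNIV. (a0\<^sup>2 * \<pi> $ j * \<pi> $ k) * (\<integral>\<omega>. (eps n 0 \<omega>)\<^sup>2 * (z n 0 \<omega> $ j * z n 0 \<omega> $ k) \<partial>M n))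
   + (\<Sum>j\<in>UNIV. (2 * a0 * \<pi> $ j) * (\<integral>\<omega>. ((eps n 0 \<omega>)\<^sup>2 * v n 0 \<omega>) * z n 0 \<omega> $ j \<partial>M n))
   + (\<integral>\<omega>. (eps n 0 \<omega>)\<^sup>2 * (v n 0 \<omega>)\<^sup>2 \<partial>M n)) sequentially"
    using ev_pos by eventually_elim (rule EY2(2))
  ultimately show ?thesis using tendsto_cong by force
qed

end

context tsls
begin

lemma dd_props: "0 < dd" "dd \<le> 1" "2 * (2 + dd) \<le> q"
  using eta_C0(1) unfolding dd_def q_def by auto

lemma K0_ge: "1 \<le> K0" unfolding K0_def by simp

lemma XX_bound: assumes n: "0 < n" shows "\<bar>XX n 0 \<omega>\<bar> \<le> K0 * (mm n \<omega>)\<^sup>2"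
proof -
  note m = mm_props[of n \<omega>]
  have m2: "1 \<le> (mm n \<omega>)\<^sup>2" using m(1) by (simp add: one_le_power)
  have zp: "\<bar>z n 0 \<omega> \<bullet> \<pi>\<bar> \<le> norm \<pi> * mm n \<omega>"
  proof -
    have "\<bar>z n 0 \<omega> \<bullet> \<pi>\<bar> \<le> norm (z n 0 \<omega>) * norm \<pi>" by (rule Cauchy_Schwarz_ineq2)
    also have "\<dots> \<le> mm n \<omega> * norm \<pi>" by (rule mult_right_mono[OF m(2)]) simp
    finally show ?thesis by (simp add: mult.commute)
  qed
  have t1: "\<bar>a0 * (z n 0 \<omega> \<bullet> \<pi>) * eps n 0 \<omega>\<bar> \<le> \<bar>a0\<bar> * norm \<pi> * (mm n \<omega>)\<^sup>2"
  proof -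
    have "\<bar>a0 * (z n 0 \<omega> \<bullet> \<pi>) * eps n 0 \<omega>\<bar> = \<bar>a0\<bar> * (\<bar>z n 0 \<omega> \<bullet> \<pi>\<bar> * \<bar>eps n 0 \<omega>\<bar>)" by (simp add: abs_mult)
    also have "\<dots> \<le> \<bar>a0\<bar> * ((norm \<pi> * mm n \<omega>) * mm n \<omega>)"
      using zp m(3) by (intro mult_left_mono mult_mono) auto
    finally show ?thesis by (simp add: power2_eq_square mult_ac)
  qed
  have t2: "\<bar>v n 0 \<omega> * eps n 0 \<omega>\<bar> \<le> (mm n \<omega>)\<^sup>2"
    using m(3,4) by (simp add: abs_mult power2_eq_square mult_mono)
  have t3: "\<bar>mu n\<bar> \<le> \<bar>\<tau>\<bar>"
  proof -
    have "1 \<le> sqrt (real n)" using n by simp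
    then show ?thesis unfolding mu_def by (simp add: abs_div divide_le_eq_1 divide_le_eq mult_le_cancel_left1)
  qed
  have "\<bar>XX n 0 \<omega>\<bar> \<le> \<bar>a0 * (z n 0 \<omega> \<bullet> \<pi>) * eps n 0 \<omega>\<bar> + \<bar>v n 0 \<omega> * eps n 0 \<omega>\<bar> + \<bar>mu n\<bar>"
    unfolding XX_def Yf_def by simp
  also have "\<dots> \<le> \<bar>a0\<bar> * norm \<pi> * (mm n \<omega>)\<^sup>2 + (mm n \<omega>)\<^sup>2 + \<bar>\<tau>\<bar> * (mm n \<omega>)\<^sup>2"
  proof -
    have "\<bar>\<tau>\<bar> * 1 \<le> \<bar>\<tau>\<bar> * (mm n \<omega>)\<^sup>2" by (rule mult_left_mono[OF m2]) simp
    then have t3': "\<bar>mu n\<bar> \<le> \<bar>\<tau>\<bar> * (mm n \<omega>)\<^sup>2" using t3 by simp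
    show ?thesis by (intro add_mono t1 t2 t3')
  qed
  also have "\<dots> = K0 * (mm n \<omega>)\<^sup>2" unfolding K0_def by (simp add: algebra_simps)
  finally show ?thesis .
qed

lemma XX_sq: assumes n: "0 < n" shows "\<bar>(XX n 0 \<omega>)\<^sup>2\<bar> \<le> K0\<^sup>2 * Dm n \<omega>"
proof -
  have "\<bar>(XX n 0 \<omega>)\<^sup>2\<bar> = \<bar>XX n 0 \<omega>\<bar>\<^sup>2" by simp
  also have "\<dots> \<le> (K0 * (mm n \<omega>)\<^sup>2)\<^sup>2" by (rule power_mono[OF XX_bound[OF n]]) simp
  also have "\<dots> = K0\<^sup>2 * (mm n \<omega>)^4" by (simp add: power_mult_distrib flip: power_mult)
  also have "\<dots> \<le> K0\<^sup>2 * Dm n \<omega>" using mm_props(7) by (intro mult_left_mono) auto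
  finally show ?thesis .
qed

lemma XX_p: assumes n: "0 < n" shows "\<bar>\<bar>XX n 0 \<omega>\<bar> powr (2 + dd)\<bar> \<le> K0 powr (2 + dd) * Dm n \<omega>"
proof -
  have m1: "1 \<le> mm n \<omega>" by (rule mm_props(1))
  have sq: "(mm n \<omega>)\<^sup>2 = mm n \<omega> powr 2" using m1 by (simp add: powr_numeral)
  have pp: "((mm n \<omega>)\<^sup>2) powr (2 + dd) = mm n \<omega> powr (2 * (2 + dd))"
    unfolding sq by (simp add: powr_powr)
  have "\<bar>\<bar>XX n 0 \<omega>\<bar> powr (2 + dd)\<bar> = \<bar>XX n 0 \<omega>\<bar> powr (2 + dd)" by simp
  also have "\<dots> \<le> (K0 * (mm n \<omega>)\<^sup>2) powr (2 + dd)"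
    by (rule powr_mono2) (use XX_bound[OF n] dd_props in auto)
  also have "\<dots> = K0 powr (2 + dd) * ((mm n \<omega>)\<^sup>2) powr (2 + dd)"
    using K0_ge by (simp add: powr_mult)
  also have "\<dots> = K0 powr (2 + dd) * mm n \<omega> powr (2 * (2 + dd))" unfolding pp ..
  also have "\<dots> \<le> K0 powr (2 + dd) * Dm n \<omega>"
  proof (rule mult_left_mono)
    show "mm n \<omega> powr (2 * (2 + dd)) \<le> Dm n \<omega>"
      using powr_mono_ge1[OF m1 dd_props(3)] mm_props(6)[of n \<omega>] by linarith
  qed simp
  finally show ?thesis .
qed

lemma XX_clt: "weak_conv_m (\<lambda>n. distr (M n) borel (\<lambda>\<omega>. (\<Sum>i<n. XX n i \<omega>) / sqrt (real n * VV)))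
           std_normal_distribution"
proof (rule clt_tri[where K="K0 powr (2 + dd) * (1 + 3 * Cm)" and \<delta>=dd])
  show "prob_space (M n)" for n by (rule prob)
  show "prob_space.indep_vars (M n) (\<lambda>_. borel) (XX n) {..<n}" for n
  proof -
    interpret prob_space "M n" by (rule prob)
    have "indep_vars (\<lambda>_. borel) (\<lambda>i \<omega>. (\<lambda>t. Yf t - mu n) (z n i \<omega>, v n i \<omega>, eps n i \<omega>)) {..<n}"
      by (rule indep_vars_compose2[OF indep]) measurable
    then show ?thesis unfolding XX_def by simp
  qed
  show "distr (M n) borel (XX n i) = distr (M n) borel (XX n 0)" if "i < n" for n i
  proof -
    have T: "(\<lambda>\<omega>. (z n l \<omega>, v n l \<omega>, eps n l \<omega>)) \<in> borel_measurable (M n)" for l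
      by (intro borel_measurable_Pair) measurable
    have "distr (M n) borel (XX n l) = distr (distr (M n) borel (\<lambda>\<omega>. (z n l \<omega>, v n l \<omega>, eps n l \<omega>))) borel (\<lambda>t. Yf t - mu n)" for l
      unfolding XX_def by (subst distr_distr) (use T in \<open>auto simp: comp_def\<close>)
    then show ?thesis using ident[OF that] by simp
  qed
  show "integrable (M n) (XX n 0)" if n: "0 < n" for n
  proof -
    interpret prob_space "M n" by (rule prob)
    show ?thesis unfolding XX_def using EY(1)[OF n] by (intro Bochner_Integration.integrable_diff) auto
  qed
  show "(\<integral>\<omega>. XX n 0 \<omega> \<partial>M n) = 0" if n: "0 < n" for n
  proof -
    interpret prob_space "M n" by (rule prob)
    show ?thesis unfolding XX_def using EY[OF n] by (simp add: prob_space)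
  qed
  show "integrable (M n) (\<lambda>\<omega>. (XX n 0 \<omega>)\<^sup>2)" if n: "0 < n" for n
    by (rule intD(1)[OF n _ _ XX_sq[OF n]]) auto
  show "(\<lambda>n. \<integral>\<omega>. (XX n 0 \<omega>)\<^sup>2 \<partial>M n) \<longlonglongrightarrow> VV"
  proof -
    have eq: "(\<integral>\<omega>. (XX n 0 \<omega>)\<^sup>2 \<partial>M n) = (\<integral>\<omega>. (Yf (z n 0 \<omega>, v n 0 \<omega>, eps n 0 \<omega>))\<^sup>2 \<partial>M n) - (mu n)\<^sup>2"
      if n: "0 < n" for n
    proof -
      interpret prob_space "M n" by (rule prob)
      note a = EY[OF n] EY2(1)[OF n]
      have "(\<lambda>\<omega>. (XX n 0 \<omega>)\<^sup>2) = (\<lambda>\<omega>. (Yf (z n 0 \<omega>, v n 0 \<omega>, eps n 0 \<omega>))\<^sup>2 - 2 * mu n * Yf (z n 0 \<omega>, v n 0 \<omega>, eps n 0 \<omega>) + (mu n)\<^sup>2)"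
        unfolding XX_def by (intro ext) (simp add: power2_diff algebra_simps)
      then show ?thesis using a by (simp add: prob_space power2_eq_square)
    qed
    have mu0: "mu \<longlonglongrightarrow> 0" unfolding mu_def
      by (intro tendsto_divide_0[OF tendsto_const] filterlim_at_top_imp_at_infinity
          sqrt_at_top[THEN filterlim_compose] filterlim_real_sequentially)
    have "(\<lambda>n. (\<integral>\<omega>. (Yf (z n 0 \<omega>, v n 0 \<omega>, eps n 0 \<omega>))\<^sup>2 \<partial>M n) - (mu n)\<^sup>2) \<longlonglongrightarrow> VV - 0\<^sup>2"
      by (intro tendsto_diff lim_EY2 tendsto_power mu0)
    moreover have "eventually (\<lambda>n. (\<integral>\<omega>. (Yf (z n 0 \<omega>, v n 0 \<omega>, eps n 0 \<omega>))\<^sup>2 \<partial>M n) - (mu n)\<^sup>2 = (\<integral>\<omega>. (XX n 0 \<omega>)\<^sup>2 \<partial>M n)) sequentially"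
      using ev_pos by eventually_elim (simp add: eq)
    ultimately show ?thesis using tendsto_cong by force
  qed
  show "0 < VV" by (rule VV_pos)
  show "0 < dd" "dd \<le> 1" using dd_props by auto
  show "integrable (M n) (\<lambda>\<omega>. \<bar>XX n 0 \<omega>\<bar> powr (2 + dd))" if n: "0 < n" for n
    by (rule intD(1)[OF n _ _ XX_p[OF n]]) auto
  show "(\<integral>\<omega>. \<bar>XX n 0 \<omega>\<bar> powr (2 + dd) \<partial>M n) \<le> K0 powr (2 + dd) * (1 + 3 * Cm)" if n: "0 < n" for n
    using intD(2)[OF n _ _ XX_p[OF n]] by auto
qed

end

lemma alg1:
  fixes a S X r D rn sn :: real
  assumes "D \<noteq> 0" "rn \<noteq> 0" "sn \<noteq> 0"
  shows "((a + S) - X * (a + r) / D) / sn = a / sn + S / sn - (X / rn) * (a / sn + r / sn) / (D / rn)"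
  using assms by (simp add: field_simps)

lemma det_core:
  fixes zz :: "nat \<Rightarrow> real^'k" and vv ee :: "nat \<Rightarrow> real" and p :: "real^'k" and Q :: "real^'k^'k"
  defines "kk \<equiv> real CARD('k)"
  assumes n: "0 < n" and lam: "0 < lam" "\<And>u. lam * (norm u)\<^sup>2 \<le> u \<bullet> (Q *v u)"
    and g: "g2 = p \<bullet> (Q *v p)" "0 < g2" and sx: "sx2 = g2 + sv2" "0 \<le> sv2"
    and e: "0 < e" "e \<le> 1" "kk\<^sup>2 * e \<le> lam / 2"
    and cD: "e * (kk\<^sup>2 * (norm p)\<^sup>2 + 2 * norm p * kk + 2 * kk\<^sup>2 / lam) \<le> g2 / 2"
    and cA: "e * (kk\<^sup>2 * (norm p)\<^sup>2 + 2 * norm p * kk + 1) \<le> 1"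
    and hA: "\<And>j k. \<bar>ZtZ n zz $ j $ k / real n - Q $ j $ k\<bar> \<le> e"
    and hW: "\<And>j. \<bar>Zt n zz vv $ j / real n\<bar> \<le> e"
    and hV: "\<bar>(\<Sum>i<n. (vv i)\<^sup>2) / real n - sv2\<bar> \<le> e"
    and hS: "\<And>j. \<bar>Zt n zz ee $ j / sqrt (real n)\<bar> \<le> K" and K: "0 \<le> K"
  shows "\<bar>tau_hat n zz (\<lambda>i. zz i \<bullet> p + vv i) (\<lambda>i. \<beta> * (zz i \<bullet> p + vv i) + ee i)
          - ((1 - sx2 / g2) * (p \<bullet> Zt n zz ee) / sqrt (real n) + (\<Sum>i<n. vv i * ee i) / sqrt (real n))\<bar>
       \<le> (norm p * kk * K) * 2 * (sx2 * (e * (kk\<^sup>2 * (norm p)\<^sup>2 + 2 * norm p * kk + 2 * kk\<^sup>2 / lam))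
            + g2 * (e * (kk\<^sup>2 * (norm p)\<^sup>2 + 2 * norm p * kk + 1))) / g2\<^sup>2
          + (sx2 + 1) * (2 * kk\<^sup>2 * K * e / lam) * 2 / g2"
proof -
  define A where "A = ZtZ n zz"
  define w where "w = Zt n zz vv"
  define b where "b = Zt n zz ee"
  define rn where "rn = real n"
  define sn where "sn = sqrt (real n)"
  define Ai where "Ai = matrix_inv A"
  have rn: "0 < rn" using n unfolding rn_def by simp
  have sn: "0 < sn" "sn * sn = rn" using n unfolding sn_def rn_def by auto
  have kk: "1 \<le> kk" unfolding kk_def by (simp add: Suc_le_eq)
  define np where "np = norm p"
  have np: "0 \<le> np" unfolding np_def by simp
  have quadA: "(rn * (lam / 2)) * (norm u)\<^sup>2 \<le> u \<bullet> (A *v u)" for u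
  proof -
    have "\<bar>(1 / real n) * (u \<bullet> (A *v u)) - u \<bullet> (Q *v u)\<bar> \<le> kk\<^sup>2 * e * (norm u)\<^sup>2"
      unfolding kk_def A_def by (rule quad_perturb) (use hA in simp)
    moreover have "kk\<^sup>2 * e * (norm u)\<^sup>2 \<le> lam / 2 * (norm u)\<^sup>2" using e(3) by (intro mult_right_mono) auto
    ultimately have "lam / 2 * (norm u)\<^sup>2 \<le> (1 / rn) * (u \<bullet> (A *v u))"
      using lam(2)[of u] unfolding rn_def by linarith
    then show ?thesis using rn by (simp add: field_simps)
  qed
  have c0: "0 < rn * (lam / 2)" using rn lam by simp
  note QI = quad_invertible[OF c0 quadA]
  have inv: "invertible A" by (rule QI(1))
  have Ainv: "norm (Ai *v q) \<le> norm q / (rn * (lam / 2))" for q unfolding Ai_def by (rule QI(2))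
  have nw: "norm w \<le> kk * rn * e"
  proof -
    have "norm w \<le> (\<Sum>j\<in>UNIV. \<bar>w $ j\<bar>)" by (rule norm_le_l1_cart)
    also have "\<dots> \<le> (\<Sum>j\<in>(UNIV::'k set). rn * e)"
    proof (rule sum_mono)
      fix j have "\<bar>w $ j / rn\<bar> \<le> e" using hW[of j] unfolding w_def rn_def .
      then show "\<bar>w $ j\<bar> \<le> rn * e" using rn by (simp add: abs_div field_simps)
    qed
    finally show ?thesis unfolding kk_def by simp
  qed
  have nb: "norm b \<le> kk * sn * K"
  proof -
    have "norm b \<le> (\<Sum>j\<in>UNIV. \<bar>b $ j\<bar>)" by (rule norm_le_l1_cart)
    also have "\<dots> \<le> (\<Sum>j\<in>(UNIV::'k set). sn * K)"
    proof (rule sum_mono)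
      fix j have "\<bar>b $ j / sn\<bar> \<le> K" using hS[of j] unfolding b_def sn_def .
      then show "\<bar>b $ j\<bar> \<le> sn * K" using sn by (simp add: abs_div field_simps)
    qed
    finally show ?thesis unfolding kk_def by simp
  qed
  define gg where "gg = p \<bullet> (A *v p) / rn"
  have hg: "\<bar>gg - g2\<bar> \<le> kk\<^sup>2 * e * np\<^sup>2"
  proof -
    have "\<bar>(1 / real n) * (p \<bullet> (A *v p)) - p \<bullet> (Q *v p)\<bar> \<le> kk\<^sup>2 * e * (norm p)\<^sup>2"
      unfolding kk_def A_def by (rule quad_perturb) (use hA in simp)
    then show ?thesis unfolding gg_def g(1) rn_def np_def by simp
  qed
  have pw: "\<bar>p \<bullet> w / rn\<bar> \<le> np * kk * e"
  proof -
    have "\<bar>p \<bullet> w\<bar> \<le> np * norm w" unfolding np_def by (rule Cauchy_Schwarz_ineq2)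
    also have "\<dots> \<le> np * (kk * rn * e)" using nw np by (rule mult_left_mono)
    finally show ?thesis using rn by (simp add: abs_div field_simps)
  qed
  define Dn where "Dn = (p \<bullet> (A *v p) + 2 * (p \<bullet> w) + w \<bullet> (Ai *v w)) / rn"
  have wAw: "\<bar>w \<bullet> (Ai *v w) / rn\<bar> \<le> 2 * kk\<^sup>2 * e\<^sup>2 / lam"
  proof -
    have "\<bar>w \<bullet> (Ai *v w)\<bar> \<le> norm w * norm (Ai *v w)" by (rule Cauchy_Schwarz_ineq2)
    also have "\<dots> \<le> norm w * (norm w / (rn * (lam / 2)))" by (rule mult_left_mono[OF Ainv]) simp
    also have "\<dots> = (norm w)\<^sup>2 * 2 / (rn * lam)" by (simp add: power2_eq_square)
    also have "\<dots> \<le> (kk * rn * e)\<^sup>2 * 2 / (rn * lam)"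
      using nw rn lam by (intro divide_right_mono mult_right_mono power_mono) auto
    also have "\<dots> = 2 * kk\<^sup>2 * e\<^sup>2 / lam * rn" using rn lam by (simp add: field_simps power2_eq_square)
    finally show ?thesis using rn by (simp add: abs_div field_simps)
  qed
  have e2: "e\<^sup>2 \<le> e" using e by (simp add: power2_eq_square mult_le_cancel_left1)
  define cD where "cD = kk\<^sup>2 * np\<^sup>2 + 2 * np * kk + 2 * kk\<^sup>2 / lam"
  define cA where "cA = kk\<^sup>2 * np\<^sup>2 + 2 * np * kk + 1"
  have hD: "\<bar>Dn - g2\<bar> \<le> e * cD"
  proof -
    have "Dn - g2 = (gg - g2) + 2 * (p \<bullet> w / rn) + w \<bullet> (Ai *v w) / rn"
      unfolding Dn_def gg_def using rn by (simp add: field_simps)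
    then have "\<bar>Dn - g2\<bar> \<le> \<bar>gg - g2\<bar> + 2 * \<bar>p \<bullet> w / rn\<bar> + \<bar>w \<bullet> (Ai *v w) / rn\<bar>" by linarith
    also have "\<dots> \<le> kk\<^sup>2 * e * np\<^sup>2 + 2 * (np * kk * e) + 2 * kk\<^sup>2 * e\<^sup>2 / lam"
      using hg pw wAw by linarith
    also have "\<dots> \<le> kk\<^sup>2 * e * np\<^sup>2 + 2 * (np * kk * e) + 2 * kk\<^sup>2 * e / lam"
      using e2 lam by (intro add_left_mono divide_right_mono mult_left_mono) auto
    also have "\<dots> = e * cD" unfolding cD_def by (simp add: algebra_simps)
    finally show ?thesis .
  qed
  define Sxx where "Sxx = (\<Sum>i<n. (zz i \<bullet> p + vv i)\<^sup>2)"
  define ah where "ah = Sxx / rn"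
  have Sxx_eq: "Sxx = p \<bullet> (A *v p) + 2 * (p \<bullet> w) + (\<Sum>i<n. (vv i)\<^sup>2)"
  proof -
    have "Sxx = (\<Sum>i<n. (zz i \<bullet> p)\<^sup>2) + 2 * (\<Sum>i<n. vv i * (zz i \<bullet> p)) + (\<Sum>i<n. (vv i)\<^sup>2)"
      unfolding Sxx_def by (simp add: power2_sum sum.distrib sum_distrib_left mult_ac)
    then show ?thesis unfolding A_def w_def quad_ZtZ inner_Zt .
  qed
  have hAh: "\<bar>ah - sx2\<bar> \<le> e * cA"
  proof -
    have "ah - sx2 = (gg - g2) + 2 * (p \<bullet> w / rn) + ((\<Sum>i<n. (vv i)\<^sup>2) / rn - sv2)"
      unfolding ah_def Sxx_eq gg_def sx(1) using rn by (simp add: field_simps)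
    then have "\<bar>ah - sx2\<bar> \<le> \<bar>gg - g2\<bar> + 2 * \<bar>p \<bullet> w / rn\<bar> + \<bar>(\<Sum>i<n. (vv i)\<^sup>2) / rn - sv2\<bar>" by linarith
    also have "\<dots> \<le> kk\<^sup>2 * e * np\<^sup>2 + 2 * (np * kk * e) + e"
      using hg pw hV unfolding rn_def by linarith
    also have "\<dots> = e * cA" unfolding cA_def by (simp add: algebra_simps)
    finally show ?thesis .
  qed
  define P where "P = p \<bullet> b / sn"
  define rho where "rho = w \<bullet> (Ai *v b) / sn"
  have hP: "\<bar>P\<bar> \<le> np * kk * K"
  proof -
    have "\<bar>p \<bullet> b\<bar> \<le> np * norm b" unfolding np_def by (rule Cauchy_Schwarz_ineq2)
    also have "\<dots> \<le> np * (kk * sn * K)" using nb np by (rule mult_left_mono)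
    finally show ?thesis unfolding P_def using sn by (simp add: abs_div field_simps)
  qed
  have hr: "\<bar>rho\<bar> \<le> 2 * kk\<^sup>2 * K * e / lam"
  proof -
    have "\<bar>w \<bullet> (Ai *v b)\<bar> \<le> norm w * norm (Ai *v b)" by (rule Cauchy_Schwarz_ineq2)
    also have "\<dots> \<le> (kk * rn * e) * (norm b / (rn * (lam / 2)))" by (intro mult_mono nw Ainv) (use kk rn e in auto)
    also have "\<dots> \<le> (kk * rn * e) * ((kk * sn * K) / (rn * (lam / 2)))"
      using nb rn lam kk e by (intro mult_left_mono divide_right_mono) auto
    also have "\<dots> = 2 * kk\<^sup>2 * K * e / lam * sn" using rn lam by (simp add: field_simps power2_eq_square)
    finally show ?thesis unfolding rho_def using sn by (simp add: abs_div field_simps)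
  qed
  have Dpos: "g2 / 2 \<le> Dn" using hD cD unfolding cD_def np_def by linarith
  have D0: "p \<bullet> (A *v p) + 2 * (p \<bullet> w) + w \<bullet> (Ai *v w) \<noteq> 0"
  proof
    assume "p \<bullet> (A *v p) + 2 * (p \<bullet> w) + w \<bullet> (Ai *v w) = 0"
    then have "Dn = 0" unfolding Dn_def by simp
    then show False using Dpos g(2) by simp
  qed
  have tf: "tau_hat n zz (\<lambda>i. zz i \<bullet> p + vv i) (\<lambda>i. \<beta> * (zz i \<bullet> p + vv i) + ee i)
      = P + (\<Sum>i<n. vv i * ee i) / sn - ah * (P + rho) / Dn"
  proof -
    have "tau_hat n zz (\<lambda>i. zz i \<bullet> p + vv i) (\<lambda>i. \<beta> * (zz i \<bullet> p + vv i) + ee i)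
      = ((p \<bullet> b + (\<Sum>i<n. vv i * ee i)) - Sxx * (p \<bullet> b + w \<bullet> (Ai *v b))
        / (p \<bullet> (A *v p) + 2 * (p \<bullet> w) + w \<bullet> (Ai *v w))) / sn"
      unfolding A_def w_def b_def Ai_def Sxx_def sn_def
      by (rule tau_hat_formula) (use inv D0 in \<open>simp_all add: A_def w_def Ai_def\<close>)
    also have "\<dots> = P + (\<Sum>i<n. vv i * ee i) / sn - ah * (P + rho) / Dn"
      unfolding P_def rho_def ah_def Dn_def by (rule alg1) (use sn rn D0 in auto)
    finally show ?thesis .
  qed
  have "\<bar>sx2 / g2 * P - ah * (P + rho) / Dn\<bar>
     \<le> (np * kk * K) * 2 * (sx2 * (e * cD) + g2 * (e * cA)) / g2\<^sup>2 + (sx2 + 1) * (2 * kk\<^sup>2 * K * e / lam) * 2 / g2"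
  proof (rule L5[OF g(2) _ hP hr hD _ hAh])
    show "0 \<le> sx2" using sx g by simp
    show "e * cD \<le> g2 / 2" using cD unfolding cD_def np_def .
    show "e * cA \<le> 1" using cA unfolding cA_def np_def .
  qed
  moreover have "tau_hat n zz (\<lambda>i. zz i \<bullet> p + vv i) (\<lambda>i. \<beta> * (zz i \<bullet> p + vv i) + ee i)
          - ((1 - sx2 / g2) * (p \<bullet> Zt n zz ee) / sqrt (real n) + (\<Sum>i<n. vv i * ee i) / sqrt (real n))
     = sx2 / g2 * P - ah * (P + rho) / Dn"
    unfolding tf P_def b_def[symmetric] sn_def[symmetric] by (simp add: algebra_simps diff_divide_distrib)
  ultimately show ?thesis unfolding cD_def cA_def np_def by simp
qed

context tsls
begin

definition "TT n i \<omega> = (z n i \<omega>, v n i \<omega>, eps n i \<omega>)"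
definition "BB = 1 + 3 * Cm"

lemma BB_ge: "1 \<le> BB" unfolding BB_def Cm_def by simp

lemma TT_meas[measurable]: "TT n i \<in> borel_measurable (M n)"
  unfolding TT_def by (intro borel_measurable_Pair) measurable

lemma cheb_gen:
  fixes g :: "(real^'k) \<times> real \<times> real \<Rightarrow> real"
  assumes n: "0 < n" and g[measurable]: "g \<in> borel_measurable borel"
    and gb: "\<And>\<omega>. (g (TT n 0 \<omega>))\<^sup>2 \<le> Dm n \<omega>" and a: "0 < a"
  shows "measure (M n) {\<omega> \<in> space (M n). a \<le> \<bar>(\<Sum>i<n. g (TT n i \<omega>)) - real n * (\<integral>\<omega>. g (TT n 0 \<omega>) \<partial>M n)\<bar>}
      \<le> real n * BB / a\<^sup>2"
proof -
  interpret prob_space "M n" by (rule prob)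
  have ind: "indep_vars (\<lambda>_. borel) (TT n) {..<n}" unfolding TT_def[abs_def] by (rule indep)
  have id: "\<And>i. i < n \<Longrightarrow> distr (M n) borel (TT n i) = distr (M n) borel (TT n 0)"
    unfolding TT_def[abs_def] by (rule ident)
  have gbi: "\<bar>(g (TT n 0 \<omega>))\<^sup>2\<bar> \<le> 1 * Dm n \<omega>" for \<omega> using gb[of \<omega>] by simp
  note I = intD[OF n _ _ gbi]
  have sq: "integrable (M n) (\<lambda>\<omega>. (g (TT n 0 \<omega>))\<^sup>2)" using I(1) by simp
  have e2: "(\<integral>\<omega>. (g (TT n 0 \<omega>))\<^sup>2 \<partial>M n) \<le> BB" using I(2) unfolding BB_def by simp
  have "measure (M n) {\<omega> \<in> space (M n). a \<le> \<bar>(\<Sum>i<n. g (TT n i \<omega>)) - real n * (\<integral>\<omega>. g (TT n 0 \<omega>) \<partial>M n)\<bar>}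
      \<le> real n * (\<integral>\<omega>. (g (TT n 0 \<omega>))\<^sup>2 \<partial>M n) / a\<^sup>2"
    by (rule row_cheb[OF ind id g sq n a])
  also have "\<dots> \<le> real n * BB / a\<^sup>2" using e2 by (intro divide_right_mono mult_left_mono) auto
  finally show ?thesis .
qed

lemma lln_gen:
  fixes g :: "(real^'k) \<times> real \<times> real \<Rightarrow> real"
  assumes g[measurable]: "g \<in> borel_measurable borel"
    and gb: "\<And>n \<omega>. 0 < n \<Longrightarrow> (g (TT n 0 \<omega>))\<^sup>2 \<le> Dm n \<omega>"
    and lim: "(\<lambda>n. \<integral>\<omega>. g (TT n 0 \<omega>) \<partial>M n) \<longlonglongrightarrow> L" and tol: "0 < tol" and pr: "0 < pr"
  shows "eventually (\<lambda>n. measure (M n) {\<omega> \<in> space (M n). tol < \<bar>(\<Sum>i<n. g (TT n i \<omega>)) / real n - L\<bar>} \<le> pr) sequentially"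
proof -
  define E where "E n = (\<integral>\<omega>. g (TT n 0 \<omega>) \<partial>M n)" for n
  have ev1: "eventually (\<lambda>n. \<bar>E n - L\<bar> < tol / 2) sequentially"
    using tendstoD[OF lim, of "tol / 2"] tol unfolding E_def dist_real_def by simp
  have ev2: "eventually (\<lambda>n. real n \<ge> 4 * BB / (tol\<^sup>2 * pr) + 1) sequentially"
    by (rule eventually_sequentiallyI[of "nat \<lceil>4 * BB / (tol\<^sup>2 * pr) + 1\<rceil>"]) linarith
  show ?thesis using ev1 ev2
  proof eventually_elim
    case (elim n)
    have BBpos: "0 < BB" using BB_ge by simp
    have "0 \<le> 4 * BB / (tol\<^sup>2 * pr)" using BBpos tol pr by simp
    then have n1: "1 \<le> real n" using elim(2) by linarith
    then have n: "0 < n" by simp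
    interpret prob_space "M n" by (rule prob)
    have sub: "{\<omega> \<in> space (M n). tol < \<bar>(\<Sum>i<n. g (TT n i \<omega>)) / real n - L\<bar>}
        \<subseteq> {\<omega> \<in> space (M n). real n * (tol / 2) \<le> \<bar>(\<Sum>i<n. g (TT n i \<omega>)) - real n * E n\<bar>}"
    proof safe
      fix \<omega> assume "\<omega> \<in> space (M n)" "tol < \<bar>(\<Sum>i<n. g (TT n i \<omega>)) / real n - L\<bar>"
      then have "tol / 2 < \<bar>(\<Sum>i<n. g (TT n i \<omega>)) / real n - E n\<bar>" using elim(1) by linarith
      also have "\<dots> = \<bar>(\<Sum>i<n. g (TT n i \<omega>)) - real n * E n\<bar> / real n"
        using n1 by (simp add: field_simps abs_div)
      finally show "real n * (tol / 2) \<le> \<bar>(\<Sum>i<n. g (TT n i \<omega>)) - real n * E n\<bar>"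
        using n1 by (simp add: field_simps)
    qed
    have "measure (M n) {\<omega> \<in> space (M n). tol < \<bar>(\<Sum>i<n. g (TT n i \<omega>)) / real n - L\<bar>}
        \<le> measure (M n) {\<omega> \<in> space (M n). real n * (tol / 2) \<le> \<bar>(\<Sum>i<n. g (TT n i \<omega>)) - real n * E n\<bar>}"
      by (rule finite_measure_mono[OF sub]) measurable
    also have "\<dots> \<le> real n * BB / (real n * (tol / 2))\<^sup>2"
      unfolding E_def by (rule cheb_gen[OF n g gb[OF n]]) (use tol n in auto)
    also have "\<dots> = 4 * BB / (tol\<^sup>2 * real n)" using n1 tol by (simp add: field_simps power2_eq_square)
    also have "\<dots> \<le> pr"
    proof -
      have "4 * BB / (tol\<^sup>2 * pr) \<le> real n" using elim(2) by linarith
      then show ?thesis using tol pr n1 by (simp add: field_simps)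
    qed
    finally show ?case .
  qed
qed

lemma tight_gen:
  fixes g :: "(real^'k) \<times> real \<times> real \<Rightarrow> real"
  assumes n: "0 < n" and g[measurable]: "g \<in> borel_measurable borel"
    and gb: "\<And>\<omega>. (g (TT n 0 \<omega>))\<^sup>2 \<le> Dm n \<omega>"
    and m0: "(\<integral>\<omega>. g (TT n 0 \<omega>) \<partial>M n) = 0" and K: "0 < K"
  shows "measure (M n) {\<omega> \<in> space (M n). K < \<bar>(\<Sum>i<n. g (TT n i \<omega>)) / sqrt (real n)\<bar>} \<le> BB / K\<^sup>2"
proof -
  interpret prob_space "M n" by (rule prob)
  have sn: "0 < sqrt (real n)" using n by simp
  have sub: "{\<omega> \<in> space (M n). K < \<bar>(\<Sum>i<n. g (TT n i \<omega>)) / sqrt (real n)\<bar>}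
      \<subseteq> {\<omega> \<in> space (M n). K * sqrt (real n) \<le> \<bar>(\<Sum>i<n. g (TT n i \<omega>)) - real n * (\<integral>\<omega>. g (TT n 0 \<omega>) \<partial>M n)\<bar>}"
    using sn by (auto simp: m0 abs_div field_simps)
  have "measure (M n) {\<omega> \<in> space (M n). K < \<bar>(\<Sum>i<n. g (TT n i \<omega>)) / sqrt (real n)\<bar>}
      \<le> measure (M n) {\<omega> \<in> space (M n). K * sqrt (real n) \<le> \<bar>(\<Sum>i<n. g (TT n i \<omega>)) - real n * (\<integral>\<omega>. g (TT n 0 \<omega>) \<partial>M n)\<bar>}"
    by (rule finite_measure_mono[OF sub]) measurable
  also have "\<dots> \<le> real n * BB / (K * sqrt (real n))\<^sup>2"
    by (rule cheb_gen[OF n g gb]) (use K sn in auto)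
  also have "\<dots> = BB / K\<^sup>2" using n K by (simp add: power_mult_distrib)
  finally show ?thesis .
qed

end

context tsls
begin

definition "gA j k (t :: (real^'k) \<times> real \<times> real) = fst t $ j * fst t $ k"
definition "gW j (t :: (real^'k) \<times> real \<times> real) = fst (snd t) * fst t $ j"
definition "gV (t :: (real^'k) \<times> real \<times> real) = (fst (snd t))\<^sup>2"
definition "gS j (t :: (real^'k) \<times> real \<times> real) = snd (snd t) * fst t $ j"

lemma g_meas[measurable]: "gA j k \<in> borel_measurable borel" "gW j \<in> borel_measurable borel"
  "gV \<in> borel_measurable borel" "gS j \<in> borel_measurable borel"
  unfolding gA_def gW_def gV_def gS_def
  by (intro borel_measurable_continuous_onI continuous_intros)+

lemma sq4: "(a * b)\<^sup>2 = a * a * b * (b::real)" by (simp add: power2_eq_square)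

lemma g_bounds:
  "(gA j k (TT n 0 \<omega>))\<^sup>2 \<le> Dm n \<omega>" "(gW j (TT n 0 \<omega>))\<^sup>2 \<le> Dm n \<omega>"
  "(gV (TT n 0 \<omega>))\<^sup>2 \<le> Dm n \<omega>" "(gS j (TT n 0 \<omega>))\<^sup>2 \<le> Dm n \<omega>"
proof -
  note m = mm_props[of n \<omega>]
  have P: "\<And>a b. \<bar>a\<bar> \<le> mm n \<omega> \<Longrightarrow> \<bar>b\<bar> \<le> mm n \<omega> \<Longrightarrow> (a * b)\<^sup>2 \<le> Dm n \<omega>"
  proof -
    fix a b :: real assume "\<bar>a\<bar> \<le> mm n \<omega>" "\<bar>b\<bar> \<le> mm n \<omega>"
    then have "\<bar>a * a * b * b\<bar> \<le> (mm n \<omega>)^4" using prod4_bound m(1) by blast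
    then show "(a * b)\<^sup>2 \<le> Dm n \<omega>" unfolding sq4 using m(7) by linarith
  qed
  show "(gA j k (TT n 0 \<omega>))\<^sup>2 \<le> Dm n \<omega>" unfolding gA_def TT_def by (simp add: P m(5))
  show "(gW j (TT n 0 \<omega>))\<^sup>2 \<le> Dm n \<omega>" unfolding gW_def TT_def by (simp add: P m(4,5))
  show "(gV (TT n 0 \<omega>))\<^sup>2 \<le> Dm n \<omega>" unfolding gV_def TT_def using P[OF m(4) m(4)] by (simp add: power2_eq_square)
  show "(gS j (TT n 0 \<omega>))\<^sup>2 \<le> Dm n \<omega>" unfolding gS_def TT_def by (simp add: P m(3,5))
qed

lemma g_means:
  "(\<lambda>n. \<integral>\<omega>. gA j k (TT n 0 \<omega>) \<partial>M n) \<longlonglongrightarrow> Q $ j $ k"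
  "(\<lambda>n. \<integral>\<omega>. gW j (TT n 0 \<omega>) \<partial>M n) \<longlonglongrightarrow> 0"
  "(\<lambda>n. \<integral>\<omega>. gV (TT n 0 \<omega>) \<partial>M n) \<longlonglongrightarrow> \<sigma>v2"
  "0 < n \<Longrightarrow> (\<integral>\<omega>. gS j (TT n 0 \<omega>) \<partial>M n) = 0"
proof -
  show "(\<lambda>n. \<integral>\<omega>. gA j k (TT n 0 \<omega>) \<partial>M n) \<longlonglongrightarrow> Q $ j $ k"
    unfolding gA_def TT_def using L_zz by simp
  show "(\<lambda>n. \<integral>\<omega>. gV (TT n 0 \<omega>) \<partial>M n) \<longlonglongrightarrow> \<sigma>v2"
    unfolding gV_def TT_def using lim_v by simp
  show "0 < n \<Longrightarrow> (\<integral>\<omega>. gS j (TT n 0 \<omega>) \<partial>M n) = 0"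
    unfolding gS_def TT_def using Eez(2) by simp
  have "eventually (\<lambda>n. 0 = (\<integral>\<omega>. gW j (TT n 0 \<omega>) \<partial>M n)) sequentially"
    using ev_pos by eventually_elim (simp add: gW_def TT_def Evz(2))
  then show "(\<lambda>n. \<integral>\<omega>. gW j (TT n 0 \<omega>) \<partial>M n) \<longlonglongrightarrow> 0"
    using tendsto_cong[of "\<lambda>_. 0"] by force
qed

lemma g_sums:
  "(\<Sum>i<n. gA j k (TT n i \<omega>)) = ZtZ n (\<lambda>i. z n i \<omega>) $ j $ k"
  "(\<Sum>i<n. gW j (TT n i \<omega>)) = Zt n (\<lambda>i. z n i \<omega>) (\<lambda>i. v n i \<omega>) $ j"
  "(\<Sum>i<n. gV (TT n i \<omega>)) = (\<Sum>i<n. (v n i \<omega>)\<^sup>2)"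
  "(\<Sum>i<n. gS j (TT n i \<omega>)) = Zt n (\<lambda>i. z n i \<omega>) (\<lambda>i. eps n i \<omega>) $ j"
  unfolding gA_def gW_def gV_def gS_def TT_def ZtZ_nth Zt_nth by simp_all

end

context tsls
begin

lemma main_rel:
  assumes n: "0 < n"
  shows "\<tau> + sqrt VV * ((\<Sum>i<n. XX n i \<omega>) / sqrt (real n * VV)) =
    (1 - \<sigma>x2 / \<gamma>2) * (\<pi> \<bullet> Zt n (\<lambda>i. z n i \<omega>) (\<lambda>i. eps n i \<omega>)) / sqrt (real n)
    + (\<Sum>i<n. v n i \<omega> * eps n i \<omega>) / sqrt (real n)"
proof -
  have sum: "(\<Sum>i<n. XX n i \<omega>) = a0 * (\<pi> \<bullet> Zt n (\<lambda>i. z n i \<omega>) (\<lambda>i. eps n i \<omega>))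
      + (\<Sum>i<n. v n i \<omega> * eps n i \<omega>) - real n * mu n"
    unfolding XX_def Yf_def inner_Zt
    by (simp add: sum_subtractf sum.distrib sum_distrib_left algebra_simps inner_commute)
  have sV: "0 < sqrt VV" using VV_pos by simp
  have sn: "0 < sqrt (real n)" using n by simp
  have mu: "real n * mu n = \<tau> * sqrt (real n)"
    unfolding mu_def using sn by (simp add: field_simps real_sqrt_mult[symmetric])
  have "sqrt VV * ((\<Sum>i<n. XX n i \<omega>) / sqrt (real n * VV)) = (\<Sum>i<n. XX n i \<omega>) / sqrt (real n)"
    using sV sn by (simp add: real_sqrt_mult field_simps)
  then show ?thesis unfolding sum mu a0_def using sn by (simp add: field_simps)
qed

lemma frac_le1: "0 \<le> (X::real) \<Longrightarrow> X \<le> S \<Longrightarrow> 0 < S \<Longrightarrow> (1 / S) * X \<le> 1"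
  by (simp add: field_simps)

end

context tsls
begin

lemma close:
  assumes d: "0 < d0" and pr: "0 < pr"
  shows "eventually (\<lambda>n. measure (M n) {\<omega> \<in> space (M n).
     d0 < \<bar>tau_hat n (\<lambda>i. z n i \<omega>) (\<lambda>i. x n i \<omega>) (\<lambda>i. y n i \<omega>)
            - (\<tau> + sqrt VV * ((\<Sum>i<n. XX n i \<omega>) / sqrt (real n * VV)))\<bar>} \<le> pr) sequentially"
proof -
  obtain lam where lam: "0 < lam" "\<And>u. lam * (norm u)\<^sup>2 \<le> u \<bullet> (Q *v u)"
    using pos_def_lower[OF Q_pos] by blast
  define kk where "kk = real CARD('k)"
  define np where "np = norm \<pi>"
  have kk: "1 \<le> kk" unfolding kk_def by (simp add: Suc_le_eq)
  have np: "0 \<le> np" unfolding np_def by simp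
  have g2: "0 < \<gamma>2" by (rule \<gamma>2_pos)
  have sx: "0 \<le> \<sigma>x2" unfolding \<sigma>x2_def using g2 \<sigma>v2_pos by simp
  have BB: "1 \<le> BB" by (rule BB_ge)
  define K where "K = sqrt (2 * kk * BB / pr) + 1"
  have nn: "0 \<le> 2 * kk * BB / pr" using kk BB pr by (intro divide_nonneg_pos mult_nonneg_nonneg) auto
  have sq0: "0 \<le> sqrt (2 * kk * BB / pr)" using nn by simp
  have Kpos: "0 < K" unfolding K_def using sq0 by linarith
  have K2: "BB / K\<^sup>2 \<le> pr / (2 * kk)"
  proof -
    have "sqrt (2 * kk * BB / pr) \<le> K" unfolding K_def by simp
    then have "(sqrt (2 * kk * BB / pr))\<^sup>2 \<le> K\<^sup>2" by (rule power_mono) (rule sq0)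
    then have "2 * kk * BB / pr \<le> K\<^sup>2" using nn by simp
    then show ?thesis using kk BB pr Kpos by (simp add: field_simps)
  qed
  define cD where "cD = kk\<^sup>2 * np\<^sup>2 + 2 * np * kk + 2 * kk\<^sup>2 / lam"
  define cA where "cA = kk\<^sup>2 * np\<^sup>2 + 2 * np * kk + 1"
  define Cb where "Cb = (np * kk * K) * 2 * (\<sigma>x2 * cD + \<gamma>2 * cA) / \<gamma>2\<^sup>2 + (\<sigma>x2 + 1) * (2 * kk\<^sup>2 * K / lam) * 2 / \<gamma>2"
  have cD0: "0 \<le> cD" unfolding cD_def using np kk lam by simp
  have cA0: "0 \<le> cA" unfolding cA_def using np kk by simp
  have Cb0: "0 \<le> Cb" unfolding Cb_def using np kk Kpos g2 sx cD0 cA0 lam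
    by (intro add_nonneg_nonneg divide_nonneg_pos mult_nonneg_nonneg) auto
  define S where "S = 1 + 2 * kk\<^sup>2 / lam + 2 * cD / \<gamma>2 + cA + Cb / d0"
  have t1: "0 \<le> 2 * kk\<^sup>2 / lam" "0 \<le> 2 * cD / \<gamma>2" "0 \<le> Cb / d0" using lam cD0 g2 Cb0 d by auto
  have Spos: "0 < S" unfolding S_def using t1 cA0 by linarith
  define e where "e = 1 / S"
  have e0: "0 < e" unfolding e_def using Spos by simp
  have e1: "e \<le> 1" unfolding e_def using frac_le1[of 1 S] Spos t1 cA0 unfolding S_def by simp
  have e2: "kk\<^sup>2 * e \<le> lam / 2"
  proof -
    have "e * (2 * kk\<^sup>2 / lam) \<le> 1" unfolding e_def by (rule frac_le1) (use t1 cA0 Spos in \<open>auto simp: S_def\<close>)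
    then show ?thesis using lam by (simp add: field_simps)
  qed
  have e3: "e * cD \<le> \<gamma>2 / 2"
  proof -
    have "e * (2 * cD / \<gamma>2) \<le> 1" unfolding e_def by (rule frac_le1) (use t1 cA0 Spos in \<open>auto simp: S_def\<close>)
    then show ?thesis using g2 by (simp add: field_simps)
  qed
  have e4: "e * cA \<le> 1" unfolding e_def by (rule frac_le1) (use t1 cA0 Spos in \<open>auto simp: S_def\<close>)
  have e5: "e * Cb \<le> d0"
  proof -
    have "e * (Cb / d0) \<le> 1" unfolding e_def by (rule frac_le1) (use t1 cA0 Spos in \<open>auto simp: S_def\<close>)
    then show ?thesis using d by (simp add: field_simps)
  qed
  have kk2: "0 < kk\<^sup>2" using kk by simp
  have EA: "eventually (\<lambda>n. \<forall>j k. measure (M n) {\<omega> \<in> space (M n). e < \<bar>(\<Sum>i<n. gA j k (TT n i \<omega>)) / real n - Q $ j $ k\<bar>}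
      \<le> pr / (4 * kk\<^sup>2)) sequentially"
    by (intro eventually_all_finite lln_gen g_meas g_bounds g_means e0) (use pr kk2 in simp)
  have EW: "eventually (\<lambda>n. \<forall>j. measure (M n) {\<omega> \<in> space (M n). e < \<bar>(\<Sum>i<n. gW j (TT n i \<omega>)) / real n - 0\<bar>}
      \<le> pr / (8 * kk)) sequentially"
    by (intro eventually_all_finite lln_gen g_meas g_bounds g_means e0) (use pr kk in simp)
  have EV: "eventually (\<lambda>n. measure (M n) {\<omega> \<in> space (M n). e < \<bar>(\<Sum>i<n. gV (TT n i \<omega>)) / real n - \<sigma>v2\<bar>}
      \<le> pr / 8) sequentially"
    by (intro lln_gen g_meas g_bounds g_means e0) (use pr in simp)
  show ?thesis using EA EW EV ev_pos
  proof eventually_elim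
    case (elim n)
    have n: "0 < n" by (rule elim(4))
    interpret prob_space "M n" by (rule prob)
    define BA where "BA j k = {\<omega> \<in> space (M n). e < \<bar>(\<Sum>i<n. gA j k (TT n i \<omega>)) / real n - Q $ j $ k\<bar>}" for j k
    define BW where "BW j = {\<omega> \<in> space (M n). e < \<bar>(\<Sum>i<n. gW j (TT n i \<omega>)) / real n - 0\<bar>}" for j
    define BV where "BV = {\<omega> \<in> space (M n). e < \<bar>(\<Sum>i<n. gV (TT n i \<omega>)) / real n - \<sigma>v2\<bar>}"
    define BS where "BS j = {\<omega> \<in> space (M n). K < \<bar>(\<Sum>i<n. gS j (TT n i \<omega>)) / sqrt (real n)\<bar>}" for j
    have sets: "BA j k \<in> sets (M n)" "BW j \<in> sets (M n)" "BV \<in> sets (M n)" "BS j \<in> sets (M n)" for j k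
      unfolding BA_def BW_def BV_def BS_def by measurable
    have pS: "measure (M n) (BS j) \<le> pr / (2 * kk)" for j
      using tight_gen[OF n g_meas(4)[where j=j] g_bounds(4)[where j=j] g_means(4)[OF n, where j=j] Kpos] K2 unfolding BS_def by linarith
    define U where "U = (\<Union>j. \<Union>k. BA j k) \<union> (\<Union>j. BW j) \<union> BV \<union> (\<Union>j. BS j)"
    have sub: "{\<omega> \<in> space (M n). d0 < \<bar>tau_hat n (\<lambda>i. z n i \<omega>) (\<lambda>i. x n i \<omega>) (\<lambda>i. y n i \<omega>)
            - (\<tau> + sqrt VV * ((\<Sum>i<n. XX n i \<omega>) / sqrt (real n * VV)))\<bar>} \<subseteq> U"
    proof (rule subsetI, rule ccontr)
      fix \<omega> assume w: "\<omega> \<in> {\<omega> \<in> space (M n). d0 < \<bar>tau_hat n (\<lambda>i. z n i \<omega>) (\<lambda>i. x n i \<omega>) (\<lambda>i. y n i \<omega>)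
            - (\<tau> + sqrt VV * ((\<Sum>i<n. XX n i \<omega>) / sqrt (real n * VV)))\<bar>}" and nU: "\<omega> \<notin> U"
      have sp: "\<omega> \<in> space (M n)" using w by simp
      have hA: "\<bar>ZtZ n (\<lambda>i. z n i \<omega>) $ j $ k / real n - Q $ j $ k\<bar> \<le> e" for j k
        using nU sp unfolding U_def BA_def g_sums by (auto simp: not_less)
      have hW: "\<bar>Zt n (\<lambda>i. z n i \<omega>) (\<lambda>i. v n i \<omega>) $ j / real n\<bar> \<le> e" for j
        using nU sp unfolding U_def BW_def g_sums by (auto simp: not_less)
      have hV: "\<bar>(\<Sum>i<n. (v n i \<omega>)\<^sup>2) / real n - \<sigma>v2\<bar> \<le> e"
        using nU sp unfolding U_def BV_def g_sums by (auto simp: not_less)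
      have hS: "\<bar>Zt n (\<lambda>i. z n i \<omega>) (\<lambda>i. eps n i \<omega>) $ j / sqrt (real n)\<bar> \<le> K" for j
        using nU sp unfolding U_def BS_def g_sums by (auto simp: not_less)
      have xeq: "(\<lambda>i. x n i \<omega>) = (\<lambda>i. z n i \<omega> \<bullet> \<pi> + v n i \<omega>)" by (simp add: x_def)
      have yeq: "(\<lambda>i. y n i \<omega>) = (\<lambda>i. \<beta> * (z n i \<omega> \<bullet> \<pi> + v n i \<omega>) + eps n i \<omega>)" by (simp add: y_def x_def)
      have "\<bar>tau_hat n (\<lambda>i. z n i \<omega>) (\<lambda>i. z n i \<omega> \<bullet> \<pi> + v n i \<omega>) (\<lambda>i. \<beta> * (z n i \<omega> \<bullet> \<pi> + v n i \<omega>) + eps n i \<omega>)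
          - ((1 - \<sigma>x2 / \<gamma>2) * (\<pi> \<bullet> Zt n (\<lambda>i. z n i \<omega>) (\<lambda>i. eps n i \<omega>)) / sqrt (real n)
             + (\<Sum>i<n. v n i \<omega> * eps n i \<omega>) / sqrt (real n))\<bar>
       \<le> (norm \<pi> * kk * K) * 2 * (\<sigma>x2 * (e * (kk\<^sup>2 * (norm \<pi>)\<^sup>2 + 2 * norm \<pi> * kk + 2 * kk\<^sup>2 / lam))
            + \<gamma>2 * (e * (kk\<^sup>2 * (norm \<pi>)\<^sup>2 + 2 * norm \<pi> * kk + 1))) / \<gamma>2\<^sup>2
          + (\<sigma>x2 + 1) * (2 * kk\<^sup>2 * K * e / lam) * 2 / \<gamma>2"
        unfolding kk_def
      proof (rule det_core[OF n lam \<gamma>2_def g2 \<sigma>x2_def])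
        show "0 \<le> \<sigma>v2" using \<sigma>v2_pos by simp
        show "0 < e" "e \<le> 1" by (fact e0, fact e1)
        show "(real CARD('k))\<^sup>2 * e \<le> lam / 2" using e2 unfolding kk_def .
        show "e * ((real CARD('k))\<^sup>2 * (norm \<pi>)\<^sup>2 + 2 * norm \<pi> * real CARD('k) + 2 * (real CARD('k))\<^sup>2 / lam) \<le> \<gamma>2 / 2"
          using e3 unfolding cD_def kk_def np_def .
        show "e * ((real CARD('k))\<^sup>2 * (norm \<pi>)\<^sup>2 + 2 * norm \<pi> * real CARD('k) + 1) \<le> 1"
          using e4 unfolding cA_def kk_def np_def .
      qed (use hA hW hV hS Kpos in auto)
      also have "\<dots> = e * Cb" unfolding Cb_def cD_def cA_def np_def using g2 lam
        by (simp add: field_simps)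
      finally have "\<bar>tau_hat n (\<lambda>i. z n i \<omega>) (\<lambda>i. x n i \<omega>) (\<lambda>i. y n i \<omega>)
            - (\<tau> + sqrt VV * ((\<Sum>i<n. XX n i \<omega>) / sqrt (real n * VV)))\<bar> \<le> d0"
        unfolding xeq yeq main_rel[OF n] using e5 by linarith
      then show False using w by simp
    qed
    have U_sets: "(\<Union>j. \<Union>k. BA j k) \<in> sets (M n)" "(\<Union>j. BW j) \<in> sets (M n)" "(\<Union>j. BS j) \<in> sets (M n)"
      using sets by auto
    have m1: "measure (M n) (\<Union>j. \<Union>k. BA j k) \<le> pr / 4"
    proof -
      have "measure (M n) (\<Union>j. \<Union>k. BA j k) \<le> (\<Sum>j\<in>UNIV. measure (M n) (\<Union>k. BA j k))"
        by (rule finite_measure_subadditive_finite) (use sets in auto)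
      also have "\<dots> \<le> (\<Sum>j\<in>(UNIV::'k set). \<Sum>k\<in>(UNIV::'k set). measure (M n) (BA j k))"
        by (intro sum_mono finite_measure_subadditive_finite) (use sets in auto)
      also have "\<dots> \<le> (\<Sum>j\<in>(UNIV::'k set). \<Sum>k\<in>(UNIV::'k set). pr / (4 * kk\<^sup>2))"
        using elim(1) unfolding BA_def by (intro sum_mono) auto
      also have "\<dots> = pr / 4" using kk2 unfolding kk_def by (simp add: power2_eq_square)
      finally show ?thesis .
    qed
    have m2: "measure (M n) (\<Union>j. BW j) \<le> pr / 8"
    proof -
      have "measure (M n) (\<Union>j. BW j) \<le> (\<Sum>j\<in>UNIV. measure (M n) (BW j))"
        by (rule finite_measure_subadditive_finite) (use sets in auto)
      also have "\<dots> \<le> (\<Sum>j\<in>(UNIV::'k set). pr / (8 * kk))"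
        using elim(2) unfolding BW_def by (intro sum_mono) auto
      also have "\<dots> = pr / 8" using kk unfolding kk_def by simp
      finally show ?thesis .
    qed
    have m3: "measure (M n) BV \<le> pr / 8" using elim(3) unfolding BV_def .
    have m4: "measure (M n) (\<Union>j. BS j) \<le> pr / 2"
    proof -
      have "measure (M n) (\<Union>j. BS j) \<le> (\<Sum>j\<in>UNIV. measure (M n) (BS j))"
        by (rule finite_measure_subadditive_finite) (use sets in auto)
      also have "\<dots> \<le> (\<Sum>j\<in>(UNIV::'k set). pr / (2 * kk))" by (intro sum_mono pS)
      also have "\<dots> = pr / 2" using kk unfolding kk_def by simp
      finally show ?thesis .
    qed
    have "measure (M n) U \<le> measure (M n) ((\<Union>j. \<Union>k. BA j k) \<union> (\<Union>j. BW j) \<union> BV) + measure (M n) (\<Union>j. BS j)"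
      unfolding U_def by (rule measure_subadditive) (use U_sets sets in auto)
    also have "\<dots> \<le> (measure (M n) ((\<Union>j. \<Union>k. BA j k) \<union> (\<Union>j. BW j)) + measure (M n) BV) + measure (M n) (\<Union>j. BS j)"
      by (intro add_right_mono measure_subadditive) (use U_sets sets in auto)
    also have "\<dots> \<le> ((measure (M n) (\<Union>j. \<Union>k. BA j k) + measure (M n) (\<Union>j. BW j)) + measure (M n) BV) + measure (M n) (\<Union>j. BS j)"
      by (intro add_right_mono measure_subadditive) (use U_sets sets in auto)
    also have "\<dots> \<le> pr" using m1 m2 m3 m4 by linarith
    finally have mU: "measure (M n) U \<le> pr" .
    have "U \<in> sets (M n)" unfolding U_def using U_sets sets by auto
    then show ?case using finite_measure_mono[OF sub] mU by linarith
  qed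
qed

end

theorem theorem5:
  fixes M :: "nat \<Rightarrow> 'a measure"
    and z :: "nat \<Rightarrow> nat \<Rightarrow> 'a \<Rightarrow> real^'k"
    and v eps x y :: "nat \<Rightarrow> nat \<Rightarrow> 'a \<Rightarrow> real"
    and \<pi> :: "real^'k" and Q :: "real^'k^'k"
    and \<beta> \<tau> \<sigma>v2 \<sigma>e2 :: real
  assumes prob: "\<And>n. prob_space (M n)"
    and meas_z: "\<And>n i. z n i \<in> borel_measurable (M n)"
    and meas_v: "\<And>n i. v n i \<in> borel_measurable (M n)"
    and meas_e: "\<And>n i. eps n i \<in> borel_measurable (M n)"
    \<comment> \<open>(a) within rows iid and mean zero\<close>
    and indep: "\<And>n. prob_space.indep_vars (M n) (\<lambda>_. borel)
                   (\<lambda>i \<omega>. (z n i \<omega>, v n i \<omega>, eps n i \<omega>)) {..<n}"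
    and ident: "\<And>n i. i < n \<Longrightarrow>
                   distr (M n) borel (\<lambda>\<omega>. (z n i \<omega>, v n i \<omega>, eps n i \<omega>))
                 = distr (M n) borel (\<lambda>\<omega>. (z n 0 \<omega>, v n 0 \<omega>, eps n 0 \<omega>))"
    and mean_z: "\<And>n i. i < n \<Longrightarrow> (\<integral>\<omega>. z n i \<omega> \<partial>M n) = 0"
    and mean_v: "\<And>n i. i < n \<Longrightarrow> (\<integral>\<omega>. v n i \<omega> \<partial>M n) = 0"
    and mean_e: "\<And>n i. i < n \<Longrightarrow> (\<integral>\<omega>. eps n i \<omega> \<partial>M n) = 0"
    \<comment> \<open>(b)\<close>
    and ze: "\<And>n i. i < n \<Longrightarrow> (\<integral>\<omega>. eps n i \<omega> *\<^sub>R z n i \<omega> \<partial>M n) = 0"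
    and zv: "\<And>n i. i < n \<Longrightarrow> (\<integral>\<omega>. v n i \<omega> *\<^sub>R z n i \<omega> \<partial>M n) = 0"
    and ev: "\<And>n i. i < n \<Longrightarrow> (\<integral>\<omega>. eps n i \<omega> * v n i \<omega> \<partial>M n) = \<tau> / sqrt (real n)"
    \<comment> \<open>(c) uniformly bounded (4+eta)-th moments\<close>
    and moments: "\<exists>\<eta>>0. \<exists>C. \<forall>n i. i < n \<longrightarrow>
        (\<integral>\<^sup>+\<omega>. ennreal (norm (z n i \<omega>) powr (4 + \<eta>)) \<partial>M n) \<le> ennreal C \<and>
        (\<integral>\<^sup>+\<omega>. ennreal (\<bar>eps n i \<omega>\<bar> powr (4 + \<eta>)) \<partial>M n) \<le> ennreal C \<and>
        (\<integral>\<^sup>+\<omega>. ennreal (\<bar>v n i \<omega>\<bar> powr (4 + \<eta>)) \<partial>M n) \<le> ennreal C"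
    \<comment> \<open>(d)\<close>
    and lim_Q: "(\<lambda>n. \<integral>\<omega>. outer (z n 0 \<omega>) (z n 0 \<omega>) \<partial>M n) \<longlonglongrightarrow> Q"
    and Q_pos: "pos_def_mat Q"
    and lim_v: "(\<lambda>n. \<integral>\<omega>. (v n 0 \<omega>)\<^sup>2 \<partial>M n) \<longlonglongrightarrow> \<sigma>v2" and \<sigma>v2_pos: "\<sigma>v2 > 0"
    and lim_e: "(\<lambda>n. \<integral>\<omega>. (eps n 0 \<omega>)\<^sup>2 \<partial>M n) \<longlonglongrightarrow> \<sigma>e2" and \<sigma>e2_pos: "\<sigma>e2 > 0"
    \<comment> \<open>(e)\<close>
    and e1: "(\<lambda>n. (\<integral>\<omega>. (eps n 0 \<omega>)\<^sup>2 *\<^sub>R outer (z n 0 \<omega>) (z n 0 \<omega>) \<partial>M n)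
               - (\<integral>\<omega>. (eps n 0 \<omega>)\<^sup>2 \<partial>M n) *\<^sub>R (\<integral>\<omega>. outer (z n 0 \<omega>) (z n 0 \<omega>) \<partial>M n))
             \<longlonglongrightarrow> 0"
    and e2: "(\<lambda>n. (\<integral>\<omega>. ((eps n 0 \<omega>)\<^sup>2 * v n 0 \<omega>) *\<^sub>R z n 0 \<omega> \<partial>M n)
               - (\<integral>\<omega>. (eps n 0 \<omega>)\<^sup>2 \<partial>M n) *\<^sub>R (\<integral>\<omega>. v n 0 \<omega> *\<^sub>R z n 0 \<omega> \<partial>M n))
             \<longlonglongrightarrow> 0"
    and e3: "(\<lambda>n. (\<integral>\<omega>. (eps n 0 \<omega>)\<^sup>2 * (v n 0 \<omega>)\<^sup>2 \<partial>M n)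
               - (\<integral>\<omega>. (eps n 0 \<omega>)\<^sup>2 \<partial>M n) * (\<integral>\<omega>. (v n 0 \<omega>)\<^sup>2 \<partial>M n))
             \<longlonglongrightarrow> 0"
    \<comment> \<open>(f)\<close>
    and x_def: "\<And>n i \<omega>. x n i \<omega> = z n i \<omega> \<bullet> \<pi> + v n i \<omega>"
    and \<pi>_nz: "\<pi> \<noteq> 0"
    and y_def: "\<And>n i \<omega>. y n i \<omega> = \<beta> * x n i \<omega> + eps n i \<omega>"
  shows "let \<gamma>2 = \<pi> \<bullet> (Q *v \<pi>); \<sigma>x2 = \<gamma>2 + \<sigma>v2; V = \<sigma>e2 * \<sigma>x2 * (\<sigma>v2 / \<gamma>2) in
         weak_conv_m
           (\<lambda>n. distr (M n) borel
                  (\<lambda>\<omega>. tau_hat n (\<lambda>i. z n i \<omega>) (\<lambda>i. x n i \<omega>) (\<lambda>i. y n i \<omega>)))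
           (density lborel (normal_density \<tau> (sqrt V)))"
proof -
  interpret T: tsls M z v eps x y \<pi> Q \<beta> \<tau> \<sigma>v2 \<sigma>e2
    by (rule tsls.intro) (fact prob, fact meas_z, fact meas_v, fact meas_e, fact indep, fact ident,
        fact ze, fact zv, fact ev, fact moments, fact lim_Q, fact Q_pos, fact lim_v, fact \<sigma>v2_pos,
        fact lim_e, fact \<sigma>e2_pos, fact e1, fact e2, fact e3, fact x_def, fact \<pi>_nz, fact y_def)
  have Veq: "\<sigma>e2 * (\<pi> \<bullet> (Q *v \<pi>) + \<sigma>v2) * (\<sigma>v2 / (\<pi> \<bullet> (Q *v \<pi>))) = T.VV"
    unfolding T.VV_def T.\<sigma>x2_def T.\<gamma>2_def ..
  have mz: "(\<lambda>\<omega>. z n i \<omega> $ j) \<in> borel_measurable (M n)" for n i j by (rule T.meas_comp)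
  have mx: "x n i \<in> borel_measurable (M n)" for n i
  proof -
    have "(\<lambda>\<omega>. z n i \<omega> \<bullet> \<pi> + v n i \<omega>) \<in> borel_measurable (M n)" by measurable
    then show ?thesis by (simp add: x_def[abs_def])
  qed
  have my: "y n i \<in> borel_measurable (M n)" for n i
  proof -
    have "(\<lambda>\<omega>. \<beta> * x n i \<omega> + eps n i \<omega>) \<in> borel_measurable (M n)" using mx[of n i] by measurable
    then show ?thesis by (simp add: y_def[abs_def])
  qed
  have "weak_conv_m (\<lambda>n. distr (M n) borel (\<lambda>\<omega>. tau_hat n (\<lambda>i. z n i \<omega>) (\<lambda>i. x n i \<omega>) (\<lambda>i. y n i \<omega>)))
      (density lborel (normal_density \<tau> (sqrt T.VV)))"
  proof (rule slutsky_normal[where U="\<lambda>n \<omega>. (\<Sum>i<n. T.XX n i \<omega>) / sqrt (real n * T.VV)"])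
    show "prob_space (M n)" for n by (rule prob)
    show "(\<lambda>\<omega>. (\<Sum>i<n. T.XX n i \<omega>) / sqrt (real n * T.VV)) \<in> borel_measurable (M n)" for n by measurable
    show "(\<lambda>\<omega>. tau_hat n (\<lambda>i. z n i \<omega>) (\<lambda>i. x n i \<omega>) (\<lambda>i. y n i \<omega>)) \<in> borel_measurable (M n)" for n
      by (rule meas_tau_hat[OF mz mx my])
    show "weak_conv_m (\<lambda>n. distr (M n) borel (\<lambda>\<omega>. (\<Sum>i<n. T.XX n i \<omega>) / sqrt (real n * T.VV))) std_normal_distribution"
      by (rule T.XX_clt)
    show "0 < sqrt T.VV" using T.VV_pos by simp
    show "eventually (\<lambda>n. measure (M n) {\<omega> \<in> space (M n). d < \<bar>tau_hat n (\<lambda>i. z n i \<omega>) (\<lambda>i. x n i \<omega>) (\<lambda>i. y n i \<omega>)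
        - (\<tau> + sqrt T.VV * ((\<Sum>i<n. T.XX n i \<omega>) / sqrt (real n * T.VV)))\<bar>} \<le> p) sequentially"
      if "0 < d" "0 < p" for d p by (rule T.close[OF that])
  qed
  then show ?thesis unfolding Let_def Veq .
qed

end
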